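(* Let $\mathcal L\subset|E+2F|$ be a base-point-free $2$-dimensional linear subsystem on $\mathbb F_1$, and let $\pi:\mathbb F_1\to\check{\mathcal L}\cong\mathbb P^2$ be the induced finite degree $3$ morphism, with quartic branch curve $B$. Then the following are equivalent: (i) $\mathcal L$ contains a member of the form $E+2F_0$ with $F_0$ a fibre; (ii) $B$ contains a line as a component; (iii) $B=Z+a$ with $Z$ an irreducible cuspidal cubic and $a$ the tangent line to $Z$ at its unique flex. Moreover $\mathcal L$ contains at most one member of the form $E+2F_0$, and exactly one member of the form $E+F_1+F_2$ or $E+2F_0$ (fibres $F_1,F_2$).
   Context: $\mathbb F_1$ is the blow-up of $\mathbb P^2$ at a point, $E$ the exceptional curve, $F$ the fibre class; $\pi$ sends a point $x$ to the pencil of members of $\mathcal L$ through $x$, and $\pi^{-1}(P)$ is the base locus of the pencil $P$ off $E$... i.e. the triple cover has fibres the base points of pencils in $\mathcal L$. $B$ is the branch divisor of $\pi$. *)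

theory Defs
  imports "HOL-Analysis.Analysis" "HOL-Computational_Algebra.Polynomial"
begin

(* Coordinates.  P^2 has homogeneous coordinates (x,y,z) = (v$1, v$2, v$3);
   F_1 is the blow-up of P^2 at p = [0:0:1].  A projective point is the class
   of a nonzero vector under nonzero scalars. *)

definition proj :: "complex^'n \<Rightarrow> (complex^'n) set" where
  "proj v = {c *s v | c. c \<noteq> 0}"

(* |E+2F| = |2H - E| = conics through p.  A member is given by its coefficient
   vector q :: complex^5 of  q$1 x^2 + q$2 xy + q$3 y^2 + q$4 xz + q$5 yz. *)
definition evalq :: "complex^5 \<Rightarrow> complex^3 \<Rightarrow> complex" where
  "evalq q v = q$1 * (v$1)^2 + q$2 * v$1 * v$2 + q$3 * (v$2)^2
              + q$4 * v$1 * v$3 + q$5 * v$2 * v$3"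

(* value of the section on the exceptional curve E at the tangent direction w *)
definition linE :: "complex^5 \<Rightarrow> complex^2 \<Rightarrow> complex" where
  "linE q w = q$4 * w$1 + q$5 * w$2"

(* points of F_1: points of P^2 other than p, and points of E = P(T_p P^2) *)
datatype f1pt = Off "(complex^3) set" | OnE "(complex^2) set"

definition F1 :: "f1pt set" where
  "F1 = {Off (proj v) | v::complex^3. (v$1, v$2) \<noteq> (0,0)}
        \<union> {OnE (proj w) | w::complex^2. w \<noteq> 0}"

definition vanishes :: "complex^5 \<Rightarrow> f1pt \<Rightarrow> bool" where
  "vanishes q P = (case P of Off S \<Rightarrow> (\<forall>v\<in>S. evalq q v = 0)
                            | OnE S \<Rightarrow> (\<forall>w\<in>S. linE q w = 0))"

definition Lspan :: "(3 \<Rightarrow> complex^5) \<Rightarrow> (complex^5) set" where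
  "Lspan qs = {(\<Sum>i\<in>UNIV. c$i *s qs i) | c::complex^3. True}"

definition lin_indep3 :: "(3 \<Rightarrow> complex^5) \<Rightarrow> bool" where
  "lin_indep3 qs = (\<forall>c::complex^3. (\<Sum>i\<in>UNIV. c$i *s qs i) = 0 \<longrightarrow> c = 0)"

definition base_point_free :: "(3 \<Rightarrow> complex^5) \<Rightarrow> bool" where
  "base_point_free qs = (\<forall>P\<in>F1. \<exists>i. \<not> vanishes (qs i) P)"

(* pi : F_1 -> P^2,  pi(P) = [qs 1 (P) : qs 2 (P) : qs 3 (P)];  maps_to qs P t means pi(P) = [t].
   (P^2 here is the dual of L: the point [t] is the pencil of members
    sum c_i qs i with sum c_i t_i = 0.) *)
definition maps_to :: "(3 \<Rightarrow> complex^5) \<Rightarrow> f1pt \<Rightarrow> complex^3 \<Rightarrow> bool" where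
  "maps_to qs P t = (case P of
      Off S \<Rightarrow> (\<exists>v\<in>S. (\<chi> i. evalq (qs i) v) \<in> proj t)
    | OnE S \<Rightarrow> (\<exists>w\<in>S. (\<chi> i. linE (qs i) w) \<in> proj t))"

(* branch locus of the finite degree 3 morphism pi: points with fewer than 3
   distinct preimages (set-theoretic support of the branch divisor B) *)
definition branch :: "(3 \<Rightarrow> complex^5) \<Rightarrow> (complex^3) set set" where
  "branch qs = {proj t | t. t \<noteq> 0 \<and> card {P \<in> F1. maps_to qs P t} < 3}"

(* the member of |E+2F| given by the conic (l1 x + l2 y)(m1 x + m2 y):
   its divisor on F_1 is E + F_l + F_m, F_l, F_m the fibres (strict transforms
   of the lines l = 0, m = 0 through p). *)
definition fibquad :: "complex^2 \<Rightarrow> complex^2 \<Rightarrow> complex^5" where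
  "fibquad l m = (\<chi> i. if i = 1 then l$1 * m$1
                     else if i = 2 then l$1 * m$2 + l$2 * m$1
                     else if i = 3 then l$2 * m$2 else 0)"

definition members_E2F :: "(3 \<Rightarrow> complex^5) \<Rightarrow> (complex^5) set set" where
  "members_E2F qs = {proj q | q. q \<in> Lspan qs \<and> (\<exists>l. l \<noteq> 0 \<and> q = fibquad l l)}"

definition members_EFF :: "(3 \<Rightarrow> complex^5) \<Rightarrow> (complex^5) set set" where
  "members_EFF qs = {proj q | q. q \<in> Lspan qs \<and> (\<exists>l m. l \<noteq> 0 \<and> m \<noteq> 0 \<and> q = fibquad l m)}"

definition is_form :: "nat \<Rightarrow> (complex^3 \<Rightarrow> complex) \<Rightarrow> bool" where
  "is_form d f = ((\<exists>c :: nat \<Rightarrow> nat \<Rightarrow> nat \<Rightarrow> complex.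
        \<forall>v. f v = (\<Sum>(i,j,k)\<in>{(i,j,k). i + j + k = d}. c i j k * (v$1)^i * (v$2)^j * (v$3)^k))
      \<and> (\<exists>v. f v \<noteq> 0))"

definition zeroset :: "(complex^3 \<Rightarrow> complex) \<Rightarrow> (complex^3) set set" where
  "zeroset f = {proj v | v. v \<noteq> 0 \<and> f v = 0}"

definition indep2 :: "complex^3 \<Rightarrow> complex^3 \<Rightarrow> bool" where
  "indep2 P Q = (\<forall>a b. a *s P + b *s Q = 0 \<longrightarrow> a = 0 \<and> b = 0)"

definition lineset :: "complex^3 \<Rightarrow> complex^3 \<Rightarrow> (complex^3) set set" where
  "lineset P Q = {proj (a *s P + b *s Q) | a b. (a, b) \<noteq> (0, 0)}"

(* the line through [P] in direction [Q] meets V(f) at [P] with multiplicity \<ge> k *)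
definition contact :: "(complex^3 \<Rightarrow> complex) \<Rightarrow> complex^3 \<Rightarrow> complex^3 \<Rightarrow> nat \<Rightarrow> bool" where
  "contact f P Q k = (\<exists>p :: complex poly. (\<forall>s. f (P + s *s Q) = poly p s) \<and> [:0, 1:] ^ k dvd p)"

definition irreducible_cubic :: "(complex^3 \<Rightarrow> complex) \<Rightarrow> bool" where
  "irreducible_cubic f = (is_form 3 f \<and>
     \<not> (\<exists>l g. is_form 1 l \<and> is_form 2 g \<and> (\<forall>v. f v = l v * g v)))"

definition singular_pt :: "(complex^3 \<Rightarrow> complex) \<Rightarrow> complex^3 \<Rightarrow> bool" where
  "singular_pt f P = (P \<noteq> 0 \<and> f P = 0 \<and> (\<forall>Q. indep2 P Q \<longrightarrow> contact f P Q 2))"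

definition smooth_pt :: "(complex^3 \<Rightarrow> complex) \<Rightarrow> complex^3 \<Rightarrow> bool" where
  "smooth_pt f P = (P \<noteq> 0 \<and> f P = 0 \<and> \<not> singular_pt f P)"

(* ordinary cusp (double point whose tangent cone is a single double line) *)
definition cusp_pt :: "(complex^3 \<Rightarrow> complex) \<Rightarrow> complex^3 \<Rightarrow> bool" where
  "cusp_pt f P = (singular_pt f P \<and> (\<exists>Q. indep2 P Q \<and> contact f P Q 3 \<and>
      (\<forall>Q'. indep2 P Q' \<and> contact f P Q' 3 \<longrightarrow> lineset P Q' = lineset P Q)))"

definition cuspidal_cubic :: "(complex^3 \<Rightarrow> complex) \<Rightarrow> bool" where
  "cuspidal_cubic f = (irreducible_cubic f \<and> (\<exists>P. cusp_pt f P))"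

definition flex_pt :: "(complex^3 \<Rightarrow> complex) \<Rightarrow> complex^3 \<Rightarrow> bool" where
  "flex_pt f P = (smooth_pt f P \<and> (\<exists>Q. indep2 P Q \<and> contact f P Q 3))"

end

theory Submission
  imports Defs "HOL-Computational_Algebra.Fundamental_Theorem_Algebra"
begin

definition det3 :: "complex^3 \<Rightarrow> complex^3 \<Rightarrow> complex^3 \<Rightarrow> complex" where
  "det3 a b c = a$1*(b$2*c$3 - b$3*c$2) - a$2*(b$1*c$3 - b$3*c$1) + a$3*(b$1*c$2 - b$2*c$1)"

definition cross3 :: "complex^3 \<Rightarrow> complex^3 \<Rightarrow> complex^3" where
  "cross3 a b = vector [a$2*b$3 - a$3*b$2, a$3*b$1 - a$1*b$3, a$1*b$2 - a$2*b$1]"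

definition dot3 :: "complex^3 \<Rightarrow> complex^3 \<Rightarrow> complex" where
  "dot3 a b = a$1*b$1 + a$2*b$2 + a$3*b$3"

definition pr2 :: "complex^3 \<Rightarrow> complex^2" where
  "pr2 v = vector [v$1, v$2]"

definition Qv :: "(3 \<Rightarrow> complex^5) \<Rightarrow> complex^2 \<Rightarrow> complex^3" where
  "Qv qs w = (\<chi> i. qs i$1 * (w$1)^2 + qs i$2 * w$1 * w$2 + qs i$3 * (w$2)^2)"

definition Lv :: "(3 \<Rightarrow> complex^5) \<Rightarrow> complex^2 \<Rightarrow> complex^3" where
  "Lv qs w = (\<chi> i. linE (qs i) w)"

definition Ct :: "(3 \<Rightarrow> complex^5) \<Rightarrow> complex^3 \<Rightarrow> complex^2 \<Rightarrow> complex" where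
  "Ct qs t w = det3 (Qv qs w) (Lv qs w) t"

lemma vec3_eq: "(x::'a^3) = y \<longleftrightarrow> x$1 = y$1 \<and> x$2 = y$2 \<and> x$3 = y$3"
  by (simp add: vec_eq_iff forall_3)

lemma vec2_eq: "(x::'a^2) = y \<longleftrightarrow> x$1 = y$1 \<and> x$2 = y$2"
  by (simp add: vec_eq_iff forall_2)

lemma vec2_nz: "(x::complex^2) \<noteq> 0 \<longleftrightarrow> x$1 \<noteq> 0 \<or> x$2 \<noteq> 0"
  by (auto simp: vec2_eq)

lemma vec3_nz: "(x::complex^3) \<noteq> 0 \<longleftrightarrow> x$1 \<noteq> 0 \<or> x$2 \<noteq> 0 \<or> x$3 \<noteq> 0"
  by (auto simp: vec3_eq)

lemma cramer3: "det3 Q L t *s Y = det3 Y L t *s Q + det3 Q Y t *s L + det3 Q L Y *s t"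
  unfolding vec3_eq det3_def by (simp; algebra)

lemma det3_lin3: "det3 Q L (a *s x + b *s y) = a * det3 Q L x + b * det3 Q L y"
  unfolding det3_def by (simp; algebra)

lemma det3_same1: "det3 Q L Q = 0"
  unfolding det3_def by algebra
lemma det3_same2: "det3 Q L L = 0"
  unfolding det3_def by algebra

lemma proj_mem: "v \<in> proj v"
  unfolding proj_def by (rule CollectI, rule exI[of _ 1], simp)

lemma mem_proj: "x \<in> proj t \<longleftrightarrow> (\<exists>c. c \<noteq> 0 \<and> x = c *s t)"
  unfolding proj_def by auto

lemma proj_scale: assumes "c \<noteq> 0" shows "proj (c *s v) = proj v"
proof -
  have 1: "x \<in> proj v" if "x \<in> proj (c *s v)" for x
  proof -
    from that obtain d where "d \<noteq> 0" "x = d *s (c *s v)" by (auto simp: mem_proj)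
    then show ?thesis using assms by (auto simp: mem_proj vector_smult_assoc intro!: exI[of _ "d*c"])
  qed
  have 2: "x \<in> proj (c *s v)" if "x \<in> proj v" for x
  proof -
    from that obtain d where "d \<noteq> 0" "x = d *s v" by (auto simp: mem_proj)
    then show ?thesis using assms by (auto simp: mem_proj vector_smult_assoc intro!: exI[of _ "d/c"])
  qed
  show ?thesis using 1 2 by blast
qed

lemma proj_eq_iff: "proj v = proj w \<longleftrightarrow> (\<exists>c. c \<noteq> 0 \<and> w = c *s v)"
proof
  assume "proj v = proj w"
  then have "w \<in> proj v" using proj_mem by metis
  then show "\<exists>c. c \<noteq> 0 \<and> w = c *s v" by (simp add: mem_proj)
next
  assume "\<exists>c. c \<noteq> 0 \<and> w = c *s v"
  then show "proj v = proj w" using proj_scale by metis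
qed

lemma proj_zero_iff: "0 \<in> proj v \<longleftrightarrow> v = 0"
  by (auto simp: mem_proj)


lemma evalq_Q_L: "evalq (qs i) v = Qv qs (pr2 v) $ i + v$3 * Lv qs (pr2 v) $ i"
  unfolding evalq_def Qv_def Lv_def linE_def pr2_def by (simp add: algebra_simps)

lemma eval_vec: "(\<chi> i. evalq (qs i) v) = Qv qs (pr2 v) + v$3 *s Lv qs (pr2 v)"
  by (simp add: vec_eq_iff evalq_Q_L)

lemma lin_vec: "(\<chi> i. linE (qs i) w) = Lv qs w"
  by (simp add: Lv_def)

lemma evalq_scale: "evalq q (c *s v) = c^2 * evalq q v"
  unfolding evalq_def by (simp add: algebra_simps power2_eq_square)

lemma linE_scale: "linE q (c *s w) = c * linE q w"
  unfolding linE_def by (simp add: algebra_simps)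

lemma Qv_scale: "Qv qs (c *s w) = c^2 *s Qv qs w"
  unfolding Qv_def by (simp add: vec_eq_iff algebra_simps power2_eq_square)

lemma Lv_scale: "Lv qs (c *s w) = c *s Lv qs w"
  unfolding Lv_def linE_def by (simp add: vec_eq_iff algebra_simps)

lemma pr2_scale: "pr2 (c *s v) = c *s pr2 v"
  unfolding pr2_def by (simp add: vec2_eq)

lemma pr2_vector: "pr2 (vector [a, b, x]) = vector [a, b]"
  unfolding pr2_def by simp

lemma pr2_proj: "pr2 ` proj v = proj (pr2 v)"
proof
  show "pr2 ` proj v \<subseteq> proj (pr2 v)" by (force simp: mem_proj pr2_scale)
  show "proj (pr2 v) \<subseteq> pr2 ` proj v"
  proof
    fix x assume "x \<in> proj (pr2 v)"
    then obtain c where "c \<noteq> 0" "x = c *s pr2 v" by (auto simp: mem_proj)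
    then show "x \<in> pr2 ` proj v" by (intro image_eqI[of _ _ "c *s v"]) (auto simp: pr2_scale mem_proj)
  qed
qed

lemma bpf_indep:
  assumes bpf: "base_point_free qs" and w: "w \<noteq> 0"
  shows "indep2 (Qv qs w) (Lv qs w)"
  unfolding indep2_def
proof (intro allI impI)
  fix s u assume su: "s *s Qv qs w + u *s Lv qs w = 0"
  show "s = 0 \<and> u = 0"
  proof (rule ccontr)
    assume nz: "\<not> (s = 0 \<and> u = 0)"
    show False
    proof (cases "s = 0")
      case False
      define v :: "complex^3" where "v = vector [s * w$1, s * w$2, u]"
      have pv: "pr2 v = s *s w" unfolding v_def pr2_def by (simp add: vec2_eq)
      have "(v$1, v$2) \<noteq> (0,0)" using w False unfolding v_def by (auto simp: vec2_eq)
      then have P: "Off (proj v) \<in> F1" unfolding F1_def by blast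
      have "vanishes (qs i) (Off (proj v))" for i
      proof -
        have "evalq (qs i) v = s * (s *s Qv qs w + u *s Lv qs w) $ i"
          by (simp add: evalq_Q_L pv Qv_scale Lv_scale, simp add: v_def algebra_simps power2_eq_square)
        then have "evalq (qs i) v = 0" using su by simp
        then show ?thesis unfolding vanishes_def by (auto simp: mem_proj evalq_scale)
      qed
      then show False using bpf P unfolding base_point_free_def by blast
    next
      case True
      then have u: "u \<noteq> 0" and L0: "Lv qs w = 0" using nz su by auto
      have P: "OnE (proj w) \<in> F1" unfolding F1_def using w by blast
      have "vanishes (qs i) (OnE (proj w))" for i
      proof -
        have "linE (qs i) w = 0" using L0 unfolding Lv_def by (metis vec_lambda_beta zero_index)
        then show ?thesis unfolding vanishes_def by (auto simp: mem_proj linE_scale)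
      qed
      then show False using bpf P unfolding base_point_free_def by blast
    qed
  qed
qed

lemma indep_det:
  assumes "indep2 Q L" shows "\<exists>Y. det3 Q L Y \<noteq> 0"
proof (rule ccontr)
  assume "\<not> (\<exists>Y. det3 Q L Y \<noteq> 0)"
  then have d: "\<And>Y. det3 Q L Y = 0" by blast
  have c1: "Q$2*L$3 - Q$3*L$2 = 0" using d[of "vector[1,0,0]"] by (simp add: det3_def)
  have c2: "Q$1*L$3 - Q$3*L$1 = 0" using d[of "vector[0,1,0]"] by (simp add: det3_def)
  have c3: "Q$1*L$2 - Q$2*L$1 = 0" using d[of "vector[0,0,1]"] by (simp add: det3_def)
  show False
  proof (cases "Q = 0")
    case True
    then have "(1::complex) *s Q + 0 *s L = 0" by simp
    then show False using assms unfolding indep2_def by fastforce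
  next
    case False
    then obtain k where k: "Q$k \<noteq> 0" by (auto simp: vec_eq_iff)
    have "(L$k / Q$k) *s Q + (-1) *s L = 0"
    proof -
      have "k = 1 \<or> k = 2 \<or> k = 3" by (rule exhaust_3)
      then show ?thesis using k c1 c2 c3 by (auto simp: vec3_eq field_simps)
    qed
    then show False using assms unfolding indep2_def by fastforce
  qed
qed

lemma indep_solve:
  assumes "indep2 Q L" "det3 Q L t = 0" shows "\<exists>s u. t = s *s Q + u *s L"
proof -
  obtain Y where Y: "det3 Q L Y \<noteq> 0" using indep_det assms(1) by blast
  have c0: "0 = det3 Y L t *s Q + det3 Q Y t *s L + det3 Q L Y *s t"
    using cramer3[of Q L t Y] assms(2) by simp
  have e: "0 = det3 Y L t * Q$i + det3 Q Y t * L$i + det3 Q L Y * t$i" for i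
    using arg_cong[where f="\<lambda>x. x$i", OF c0] by simp
  have "t = (- det3 Y L t / det3 Q L Y) *s Q + (- det3 Q Y t / det3 Q L Y) *s L"
  proof (subst vec_eq_iff, intro allI)
    fix i show "t$i = ((- det3 Y L t / det3 Q L Y) *s Q + (- det3 Q Y t / det3 Q L Y) *s L)$i"
    proof -
      have h: "t$i * det3 Q L Y = - (det3 Y L t * Q$i + det3 Q Y t * L$i)" using e[of i] by algebra
      show ?thesis using h Y by (simp add: field_simps)
    qed
  qed
  then show ?thesis by blast
qed


definition lift :: "complex^2 \<Rightarrow> complex \<Rightarrow> complex^3" where
  "lift w x = vector [w$1, w$2, x]"

definition Phi :: "(3 \<Rightarrow> complex^5) \<Rightarrow> complex^3 \<Rightarrow> f1pt set" where
  "Phi qs t = {P \<in> F1. maps_to qs P t}"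

definition Rset :: "(3 \<Rightarrow> complex^5) \<Rightarrow> complex^3 \<Rightarrow> (complex^2) set set" where
  "Rset qs t = {proj w | w. w \<noteq> 0 \<and> Ct qs t w = 0}"

definition dirp :: "f1pt \<Rightarrow> (complex^2) set" where
  "dirp P = (case P of Off S \<Rightarrow> pr2 ` S | OnE S \<Rightarrow> S)"

lemma pr2_lift[simp]: "pr2 (lift w x) = w"
  unfolding pr2_def lift_def by (simp add: vec2_eq)

lemma lift_3[simp]: "lift w x $ 3 = x"
  unfolding lift_def by simp

lemma lift_pr2: "lift (pr2 v) (v$3) = v"
  unfolding pr2_def lift_def by (simp add: vec3_eq)

lemma lift_scale: "lift (c *s w) (c * x) = c *s lift w x"
  unfolding lift_def by (simp add: vec3_eq)

lemma dirp_Off: "dirp (Off (proj (lift w x))) = proj w"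
  unfolding dirp_def by (simp add: pr2_proj)

lemma fibre_form:
  assumes "P \<in> Phi qs t"
  shows "(\<exists>w x k. w \<noteq> 0 \<and> k \<noteq> 0 \<and> P = Off (proj (lift w x)) \<and> Qv qs w + x *s Lv qs w = k *s t)
       \<or> (\<exists>w k. w \<noteq> 0 \<and> k \<noteq> 0 \<and> P = OnE (proj w) \<and> Lv qs w = k *s t)"
proof -
  have P: "P \<in> F1" "maps_to qs P t" using assms unfolding Phi_def by auto
  from P(1) show ?thesis unfolding F1_def
  proof (elim UnE CollectE exE conjE)
    fix v :: "complex^3" assume Pv: "P = Off (proj v)" and v: "(v$1, v$2) \<noteq> (0,0)"
    from P(2) obtain v' where v': "v' \<in> proj v" "(\<chi> i. evalq (qs i) v') \<in> proj t"
      unfolding Pv maps_to_def by auto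
    obtain c where c: "c \<noteq> 0" "v' = c *s v" using v'(1) by (auto simp: mem_proj)
    obtain k where k: "k \<noteq> 0" "(\<chi> i. evalq (qs i) v') = k *s t" using v'(2) by (auto simp: mem_proj)
    have "pr2 v' \<noteq> 0" using c v unfolding pr2_def by (auto simp: vec2_eq)
    moreover have "P = Off (proj (lift (pr2 v') (v'$3)))"
      unfolding lift_pr2 Pv using c proj_scale by metis
    moreover have "Qv qs (pr2 v') + (v'$3) *s Lv qs (pr2 v') = k *s t" using k eval_vec by metis
    ultimately show ?thesis using k(1) by blast
  next
    fix w :: "complex^2" assume Pw: "P = OnE (proj w)" and w: "w \<noteq> 0"
    from P(2) obtain w' where w': "w' \<in> proj w" "(\<chi> i. linE (qs i) w') \<in> proj t"
      unfolding Pw maps_to_def by auto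
    obtain c where c: "c \<noteq> 0" "w' = c *s w" using w'(1) by (auto simp: mem_proj)
    obtain k where k: "k \<noteq> 0" "Lv qs w' = k *s t" using w'(2) by (auto simp: mem_proj lin_vec)
    have "w' \<noteq> 0" using c w by simp
    moreover have "P = OnE (proj w')" using Pw c proj_scale by metis
    ultimately show ?thesis using k by blast
  qed
qed

lemma det3_scale3: "det3 Q L (k *s t) = k * det3 Q L t"
  unfolding det3_def by (simp add: algebra_simps)

lemma fibre_dir:
  assumes "P \<in> Phi qs t"
  shows "dirp P \<in> Rset qs t"
  using fibre_form[OF assms]
proof (elim disjE exE conjE)
  fix w x k assume w: "w \<noteq> 0" "k \<noteq> 0" "P = Off (proj (lift w x))" "Qv qs w + x *s Lv qs w = k *s t"
  have "k * Ct qs t w = det3 (Qv qs w) (Lv qs w) (Qv qs w + x *s Lv qs w)"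
    unfolding Ct_def w(4) det3_scale3 by simp
  also have "\<dots> = 0" using det3_lin3[of "Qv qs w" "Lv qs w" 1 "Qv qs w" x "Lv qs w"]
    by (simp add: det3_same1 det3_same2)
  finally have "Ct qs t w = 0" using w(2) by simp
  then show ?thesis unfolding Rset_def w(3) dirp_Off using w(1) by blast
next
  fix w k assume w: "w \<noteq> 0" "k \<noteq> 0" "P = OnE (proj w)" "Lv qs w = k *s t"
  have "k * Ct qs t w = det3 (Qv qs w) (Lv qs w) (Lv qs w)"
    unfolding Ct_def w(4) det3_scale3 by simp
  then have "Ct qs t w = 0" using w(2) by (simp add: det3_same2)
  then show ?thesis unfolding Rset_def w(3) dirp_def using w(1) by auto
qed


lemma indep2_unique:
  assumes "indep2 Q L" "a *s Q + b *s L = a' *s Q + b' *s L" shows "a = a'" "b = b'"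
proof -
  have "(a - a') *s Q + (b - b') *s L = 0" using assms(2)
    by (simp add: vec_eq_iff algebra_simps)
  then have "a - a' = 0 \<and> b - b' = 0" using assms(1) unfolding indep2_def by blast
  then show "a = a'" "b = b'" by auto
qed

lemma dirp_OnE: "dirp (OnE S) = S" unfolding dirp_def by simp

lemma fibre_inj:
  assumes bpf: "base_point_free qs" and t: "t \<noteq> 0"
  shows "inj_on dirp (Phi qs t)"
proof (rule inj_onI)
  fix P1 P2 assume P1: "P1 \<in> Phi qs t" and P2: "P2 \<in> Phi qs t" and d: "dirp P1 = dirp P2"
  note I = bpf_indep[OF bpf]
  show "P1 = P2"
    using fibre_form[OF P1] fibre_form[OF P2]
  proof (elim disjE exE conjE)
    fix w x k w' x' k'
    assume a: "w \<noteq> 0" "k \<noteq> 0" "P1 = Off (proj (lift w x))" "Qv qs w + x *s Lv qs w = k *s t"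
       and b: "w' \<noteq> 0" "k' \<noteq> 0" "P2 = Off (proj (lift w' x'))" "Qv qs w' + x' *s Lv qs w' = k' *s t"
    from d have "proj w = proj w'" using a(3) b(3) by (simp add: dirp_Off)
    then obtain c where c: "c \<noteq> 0" "w' = c *s w" by (auto simp: proj_eq_iff)
    have "c^2 *s Qv qs w + (c * x') *s Lv qs w = (k'/k) *s (Qv qs w + x *s Lv qs w)"
      using b(4) a(4) a(2) by (simp add: c(2) Qv_scale Lv_scale vector_smult_assoc mult.commute[of c x'])
    then have "c^2 *s Qv qs w + (c * x') *s Lv qs w = (k'/k) *s Qv qs w + (k'/k * x) *s Lv qs w"
      by (simp add: vector_add_ldistrib vector_smult_assoc)
    from indep2_unique[OF I[OF a(1)] this] have "c^2 = k'/k" "c * x' = k'/k * x" by auto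
    then have "c * x' = (c*c) * x" by (simp add: power2_eq_square)
    then have "x' = c * x" using c(1) by (simp add: mult.assoc)
    then have "lift w' x' = c *s lift w x" using c(2) lift_scale by metis
    then show "P1 = P2" using a(3) b(3) c(1) proj_scale by metis
  next
    fix w x k w' k'
    assume a: "w \<noteq> 0" "k \<noteq> 0" "P1 = Off (proj (lift w x))" "Qv qs w + x *s Lv qs w = k *s t"
       and b: "w' \<noteq> 0" "k' \<noteq> 0" "P2 = OnE (proj w')" "Lv qs w' = k' *s t"
    from d have "proj w = proj w'" using a(3) b(3) by (simp add: dirp_Off dirp_OnE)
    then obtain c where c: "c \<noteq> 0" "w' = c *s w" by (auto simp: proj_eq_iff)
    have "0 *s Qv qs w + c *s Lv qs w = (k'/k) *s (Qv qs w + x *s Lv qs w)"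
      using b(4) a(4) a(2) by (simp add: c(2) Lv_scale vector_smult_assoc)
    then have "0 *s Qv qs w + c *s Lv qs w = (k'/k) *s Qv qs w + (k'/k * x) *s Lv qs w"
      by (simp add: vector_add_ldistrib vector_smult_assoc)
    from indep2_unique[OF I[OF a(1)] this] have "0 = k'/k" by auto
    then show "P1 = P2" using a(2) b(2) by simp
  next
    fix w k w' x' k'
    assume b: "w' \<noteq> 0" "k' \<noteq> 0" "P2 = Off (proj (lift w' x'))" "Qv qs w' + x' *s Lv qs w' = k' *s t"
       and a: "w \<noteq> 0" "k \<noteq> 0" "P1 = OnE (proj w)" "Lv qs w = k *s t"
    from d have "proj w' = proj w" using a(3) b(3) by (simp add: dirp_Off dirp_OnE)
    then obtain c where c: "c \<noteq> 0" "w = c *s w'" by (auto simp: proj_eq_iff)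
    have "0 *s Qv qs w' + c *s Lv qs w' = (k/k') *s (Qv qs w' + x' *s Lv qs w')"
      using b(4) a(4) b(2) by (simp add: c(2) Lv_scale vector_smult_assoc)
    then have "0 *s Qv qs w' + c *s Lv qs w' = (k/k') *s Qv qs w' + (k/k' * x') *s Lv qs w'"
      by (simp add: vector_add_ldistrib vector_smult_assoc)
    from indep2_unique[OF I[OF b(1)] this] have "0 = k/k'" by auto
    then show "P1 = P2" using a(2) b(2) by simp
  next
    fix w k w' k'
    assume a: "w \<noteq> 0" "k \<noteq> 0" "P1 = OnE (proj w)" "Lv qs w = k *s t"
       and b: "w' \<noteq> 0" "k' \<noteq> 0" "P2 = OnE (proj w')" "Lv qs w' = k' *s t"
    from d show "P1 = P2" using a(3) b(3) by (simp add: dirp_OnE)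
  qed
qed

lemma fibre_surj:
  assumes bpf: "base_point_free qs" and t: "t \<noteq> 0" and R: "S \<in> Rset qs t"
  shows "\<exists>P \<in> Phi qs t. dirp P = S"
proof -
  obtain w where w: "S = proj w" "w \<noteq> 0" "Ct qs t w = 0" using R unfolding Rset_def by auto
  obtain s u where su: "t = s *s Qv qs w + u *s Lv qs w"
    using indep_solve[OF bpf_indep[OF bpf w(2)]] w(3) unfolding Ct_def by blast
  show ?thesis
  proof (cases "s = 0")
    case False
    define v where "v = lift w (u/s)"
    have F: "Off (proj v) \<in> F1" unfolding F1_def v_def lift_def using w(2) by (auto simp: vec2_eq)
    have "(\<chi> i. evalq (qs i) v) = (1/s) *s t"
      unfolding eval_vec v_def su using False
      by (simp add: vector_add_ldistrib vector_smult_assoc)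
    then have "maps_to qs (Off (proj v)) t" unfolding maps_to_def using False
      by (simp, intro bexI[of _ v] proj_mem) (auto simp: mem_proj intro!: exI[of _ "1/s"])
    moreover have "dirp (Off (proj v)) = S" unfolding v_def dirp_Off w(1) ..
    ultimately show ?thesis using F unfolding Phi_def by blast
  next
    case True
    then have u: "u \<noteq> 0" using t su by auto
    have F: "OnE (proj w) \<in> F1" unfolding F1_def using w(2) by auto
    have "(\<chi> i. linE (qs i) w) = (1/u) *s t"
      unfolding lin_vec su using True u by (simp add: vector_smult_assoc)
    then have "maps_to qs (OnE (proj w)) t" unfolding maps_to_def using u
      by (simp, intro bexI[of _ w] proj_mem) (auto simp: mem_proj intro!: exI[of _ "1/u"])
    then show ?thesis using F w(1) unfolding Phi_def by (auto simp: dirp_OnE)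
  qed
qed

lemma fibre_card:
  assumes bpf: "base_point_free qs" and t: "t \<noteq> 0"
  shows "card (Phi qs t) = card (Rset qs t)"
proof -
  have "bij_betw dirp (Phi qs t) (Rset qs t)"
    unfolding bij_betw_def using fibre_inj[OF assms] fibre_dir fibre_surj[OF assms] by blast
  then show ?thesis by (rule bij_betw_same_card)
qed


definition bcub :: "complex \<Rightarrow> complex \<Rightarrow> complex \<Rightarrow> complex \<Rightarrow> complex^2 \<Rightarrow> complex" where
  "bcub p q r s w = p*(w$1)^3 + q*(w$1)^2*w$2 + r*w$1*(w$2)^2 + s*(w$2)^3"

definition disc :: "complex \<Rightarrow> complex \<Rightarrow> complex \<Rightarrow> complex \<Rightarrow> complex" where
  "disc p q r s = q^2*r^2 - 4*p*r^3 - 4*q^3 * s - 27*p^2 * s^2 + 18*p*q*r * s"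

definition Roots :: "complex \<Rightarrow> complex \<Rightarrow> complex \<Rightarrow> complex \<Rightarrow> (complex^2) set set" where
  "Roots p q r s = {proj w | w. w \<noteq> 0 \<and> bcub p q r s w = 0}"

lemma quad_factor: fixes p q r :: complex shows "\<exists>a1 b1 a2 b2. p = a1*a2 \<and> q = a1*b2 + b1*a2 \<and> r = b1*b2"
proof (cases "p = 0")
  case True
  then show ?thesis by (intro exI[of _ 0] exI[of _ 1] exI[of _ q] exI[of _ r]) simp
next
  case False
  define d where "d = csqrt (q^2 - 4*p*r)"
  define x where "x = (-q + d)/(2*p)"
  have d2: "d^2 = q^2 - 4*p*r" unfolding d_def by simp
  have root: "p*x^2 + q*x + r = 0"
  proof -
    have "4*p*(p*x^2 + q*x + r) = (2*p*x)^2 + 2*q*(2*p*x) + 4*p*r" by (simp add: algebra_simps power2_eq_square)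
    also have "2*p*x = d - q" unfolding x_def using False by (simp add: field_simps)
    also have "(d - q)^2 + 2*q*(d - q) + 4*p*r = d^2 - q^2 + 4*p*r" by (simp add: algebra_simps power2_eq_square)
    also have "\<dots> = 0" using d2 by simp
    finally show ?thesis using False by simp
  qed
  have h: "- p * x * (q / p + x) = -(q*x) - p*x^2" using False by (simp add: field_simps power2_eq_square)
  have e1: "q = p * (q / p + x) + - p * x * 1" using False by (simp add: field_simps)
  have e2: "r = - p * x * (q / p + x)" unfolding h using root by algebra
  show ?thesis using e1 e2 by (intro exI[of _ p] exI[of _ "-p*x"] exI[of _ 1] exI[of _ "q/p + x"]) simp
qed

lemma cubic_factor: fixes p q r s :: complex shows
  "\<exists>a1 b1 a2 b2 a3 b3. p = a1*a2*a3 \<and> q = a1*a2*b3 + a1*b2*a3 + b1*a2*a3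
      \<and> r = a1*b2*b3 + b1*a2*b3 + b1*b2*a3 \<and> s = b1*b2*b3"
proof (cases "p = 0")
  case True
  obtain a1 b1 a2 b2 where f: "q = a1*a2" "r = a1*b2 + b1*a2" "s = b1*b2" using quad_factor by blast
  show ?thesis using True f by (intro exI[of _ a1] exI[of _ b1] exI[of _ a2] exI[of _ b2] exI[of _ 0] exI[of _ 1]) simp
next
  case False
  have "\<exists>x. poly [:s, r, q, p:] x = 0"
  proof (rule fundamental_theorem_of_algebra_alt)
    show "\<not> (\<exists>a l. a \<noteq> 0 \<and> l = 0 \<and> [:s, r, q, p:] = pCons a l)" using False by auto
  qed
  then obtain x where x: "s + x*(r + x*(q + x*p)) = 0" by auto
  obtain a1 b1 a2 b2 where f: "p = a1*a2" "q + p*x = a1*b2 + b1*a2" "r + q*x + p*x^2 = b1*b2"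
    using quad_factor by blast
  have "p = a1 * a2 * 1 \<and> q = a1 * a2 * - x + a1 * b2 * 1 + b1 * a2 * 1
    \<and> r = a1 * b2 * - x + b1 * a2 * - x + b1 * b2 * 1 \<and> s = b1 * b2 * - x"
    using f x by (intro conjI; algebra)
  then show ?thesis by blast
qed

lemma disc_factor:
  "disc (a1*a2*a3) (a1*a2*b3 + a1*b2*a3 + b1*a2*a3) (a1*b2*b3 + b1*a2*b3 + b1*b2*a3) (b1*b2*b3)
   = ((a1*b2 - a2*b1)*(a1*b3 - a3*b1)*(a2*b3 - a3*b2))^2"
  unfolding disc_def by algebra


lemma proj2_eq_det:
  fixes u v :: "complex^2"
  assumes "u \<noteq> 0" "v \<noteq> 0"
  shows "proj u = proj v \<longleftrightarrow> u$1 * v$2 - u$2 * v$1 = 0"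
proof
  assume "proj u = proj v"
  then obtain c where "v = c *s u" by (auto simp: proj_eq_iff)
  then show "u$1 * v$2 - u$2 * v$1 = 0" by (simp add: algebra_simps)
next
  assume d: "u$1 * v$2 - u$2 * v$1 = 0"
  show "proj u = proj v"
  proof (cases "u$1 = 0")
    case False
    define c where "c = v$1 / u$1"
    have "v = c *s u" using d False unfolding c_def by (simp add: vec2_eq field_simps)
    moreover have "c \<noteq> 0" using assms(2) \<open>v = c *s u\<close> by auto
    ultimately show ?thesis by (auto simp: proj_eq_iff)
  next
    case True
    then have u2: "u$2 \<noteq> 0" using assms(1) by (simp add: vec2_nz)
    define c where "c = v$2 / u$2"
    have "v = c *s u" using d True u2 unfolding c_def by (simp add: vec2_eq field_simps)
    moreover have "c \<noteq> 0" using assms(2) \<open>v = c *s u\<close> by auto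
    ultimately show ?thesis by (auto simp: proj_eq_iff)
  qed
qed

lemma linroots:
  fixes a b :: complex
  assumes "a \<noteq> 0 \<or> b \<noteq> 0"
  shows "{proj w | w::complex^2. w \<noteq> 0 \<and> a * w$1 + b * w$2 = 0} = {proj (vector [b, -a])}"
proof -
  have nz: "(vector [b, -a] :: complex^2) \<noteq> 0" using assms by (auto simp: vec2_nz)
  have "proj w = proj (vector [b, -a])" if "w \<noteq> 0" "a * w$1 + b * w$2 = 0" for w :: "complex^2"
  proof -
    have h: "w$1 * (vector [b, -a]::complex^2)$2 - w$2 * (vector [b, -a]::complex^2)$1 = 0"
      using that(2) by simp algebra
    show ?thesis using proj2_eq_det[OF that(1) nz] h by blast
  qed
  moreover have "\<exists>w::complex^2. proj (vector [b, -a]) = proj w \<and> w \<noteq> 0 \<and> a * w$1 + b * w$2 = 0"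
    using nz by (intro exI[of _ "vector [b, -a]"]) (simp add: algebra_simps)
  ultimately show ?thesis by blast
qed

lemma card3_lt: "card {x, y, z} < 3 \<longleftrightarrow> x = y \<or> x = z \<or> y = z"
  by (auto simp: card_insert_if)

lemma bcub_factor:
  "bcub (a1*a2*a3) (a1*a2*b3 + a1*b2*a3 + b1*a2*a3) (a1*b2*b3 + b1*a2*b3 + b1*b2*a3) (b1*b2*b3) w
   = (a1 * w$1 + b1 * w$2) * (a2 * w$1 + b2 * w$2) * (a3 * w$1 + b3 * w$2)"
  unfolding bcub_def by algebra

lemma lemmaB:
  fixes p q r s :: complex
  assumes nz: "\<not> (p = 0 \<and> q = 0 \<and> r = 0 \<and> s = 0)"
  shows "card (Roots p q r s) < 3 \<longleftrightarrow> disc p q r s = 0"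
proof -
  obtain a1 b1 a2 b2 a3 b3 where f: "p = a1*a2*a3" "q = a1*a2*b3 + a1*b2*a3 + b1*a2*a3"
      "r = a1*b2*b3 + b1*a2*b3 + b1*b2*a3" "s = b1*b2*b3"
    using cubic_factor by blast
  have n1: "a1 \<noteq> 0 \<or> b1 \<noteq> 0" and n2: "a2 \<noteq> 0 \<or> b2 \<noteq> 0" and n3: "a3 \<noteq> 0 \<or> b3 \<noteq> 0"
    using nz unfolding f by auto
  define r1 :: "complex^2" where "r1 = vector [b1, -a1]"
  define r2 :: "complex^2" where "r2 = vector [b2, -a2]"
  define r3 :: "complex^2" where "r3 = vector [b3, -a3]"
  have z1: "r1 \<noteq> 0" and z2: "r2 \<noteq> 0" and z3: "r3 \<noteq> 0" using n1 n2 n3 unfolding r1_def r2_def r3_def by (auto simp: vec2_nz)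
  have "Roots p q r s = {proj w | w::complex^2. w \<noteq> 0 \<and> a1 * w$1 + b1 * w$2 = 0}
      \<union> {proj w | w::complex^2. w \<noteq> 0 \<and> a2 * w$1 + b2 * w$2 = 0}
      \<union> {proj w | w::complex^2. w \<noteq> 0 \<and> a3 * w$1 + b3 * w$2 = 0}"
    unfolding Roots_def f bcub_factor by auto
  also have "\<dots> = {proj r1, proj r2, proj r3}"
    unfolding linroots[OF n1] linroots[OF n2] linroots[OF n3] r1_def r2_def r3_def by auto
  finally have R: "Roots p q r s = {proj r1, proj r2, proj r3}" .
  have "card (Roots p q r s) < 3 \<longleftrightarrow> (a1*b2 - a2*b1 = 0 \<or> a1*b3 - a3*b1 = 0 \<or> a2*b3 - a3*b2 = 0)"
    unfolding R card3_lt proj2_eq_det[OF z1 z2] proj2_eq_det[OF z1 z3] proj2_eq_det[OF z2 z3]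
    unfolding r1_def r2_def r3_def by (simp add: algebra_simps)
  also have "\<dots> \<longleftrightarrow> disc p q r s = 0" unfolding f disc_factor by simp
  finally show ?thesis .
qed

definition Mv :: "complex \<Rightarrow> complex \<Rightarrow> complex \<Rightarrow> complex \<Rightarrow> complex^2 \<Rightarrow> complex^2" where
  "Mv m11 m12 m21 m22 z = vector [m11 * z$1 + m12 * z$2, m21 * z$1 + m22 * z$2]"

lemma Mv_scale: "Mv m11 m12 m21 m22 (c *s z) = c *s Mv m11 m12 m21 m22 z"
  unfolding Mv_def by (simp add: vec2_eq algebra_simps)

lemma Mv_inv:
  assumes "m11 * m22 - m12 * m21 \<noteq> 0"
  shows "\<exists>z. Mv m11 m12 m21 m22 z = w"
proof -
  define d where "d = m11 * m22 - m12 * m21"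
  have d: "d \<noteq> 0" using assms d_def by simp
  define z :: "complex^2" where "z = vector [(m22 * w$1 - m12 * w$2)/d, (m11 * w$2 - m21 * w$1)/d]"
  have "m11 * z$1 + m12 * z$2 = (m11 * (m22 * w$1 - m12 * w$2) + m12 * (m11 * w$2 - m21 * w$1))/d"
    unfolding z_def by (simp add: add_divide_distrib)
  also have "m11 * (m22 * w$1 - m12 * w$2) + m12 * (m11 * w$2 - m21 * w$1) = d * w$1"
    unfolding d_def by algebra
  finally have 1: "m11 * z$1 + m12 * z$2 = w$1" using d by simp
  have "m21 * z$1 + m22 * z$2 = (m21 * (m22 * w$1 - m12 * w$2) + m22 * (m11 * w$2 - m21 * w$1))/d"
    unfolding z_def by (simp add: add_divide_distrib)
  also have "m21 * (m22 * w$1 - m12 * w$2) + m22 * (m11 * w$2 - m21 * w$1) = d * w$2"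
    unfolding d_def by algebra
  finally have 2: "m21 * z$1 + m22 * z$2 = w$2" using d by simp
  show ?thesis using 1 2 unfolding Mv_def by (intro exI[of _ z]) (simp add: vec2_eq)
qed

lemma Mv_inj:
  assumes "m11 * m22 - m12 * m21 \<noteq> 0"
  shows "inj (Mv m11 m12 m21 m22)"
proof (rule injI)
  fix x y assume "Mv m11 m12 m21 m22 x = Mv m11 m12 m21 m22 y"
  then have e1: "m11 * x$1 + m12 * x$2 = m11 * y$1 + m12 * y$2" and e2: "m21 * x$1 + m22 * x$2 = m21 * y$1 + m22 * y$2"
    unfolding Mv_def by (auto simp: vec2_eq)
  have "(m11 * m22 - m12 * m21) * (x$1 - y$1) = 0" using e1 e2 by algebra
  moreover have "(m11 * m22 - m12 * m21) * (x$2 - y$2) = 0" using e1 e2 by algebra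
  ultimately show "x = y" using assms by (simp add: vec2_eq)
qed

lemma Mv_zero: "Mv m11 m12 m21 m22 0 = 0"
  unfolding Mv_def by (simp add: vec2_eq)

lemma roots_subst:
  assumes det: "m11 * m22 - m12 * m21 \<noteq> 0"
  shows "card {proj w | w::complex^2. w \<noteq> 0 \<and> F w = 0}
       = card {proj z | z::complex^2. z \<noteq> 0 \<and> F (Mv m11 m12 m21 m22 z) = 0}"
proof -
  let ?M = "Mv m11 m12 m21 m22"
  have inj: "inj ?M" using Mv_inj[OF det] .
  have img: "?M ` proj z = proj (?M z)" for z
  proof
    show "?M ` proj z \<subseteq> proj (?M z)" by (force simp: mem_proj Mv_scale)
    show "proj (?M z) \<subseteq> ?M ` proj z"
    proof
      fix x assume "x \<in> proj (?M z)"
      then obtain c where "c \<noteq> 0" "x = c *s ?M z" by (auto simp: mem_proj)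
      then show "x \<in> ?M ` proj z" by (intro image_eqI[of _ _ "c *s z"]) (auto simp: Mv_scale mem_proj)
    qed
  qed
  have eq: "{proj w | w::complex^2. w \<noteq> 0 \<and> F w = 0}
      = (\<lambda>S. ?M ` S) ` {proj z | z::complex^2. z \<noteq> 0 \<and> F (?M z) = 0}"
  proof
    show "{proj w | w::complex^2. w \<noteq> 0 \<and> F w = 0} \<subseteq> (\<lambda>S. ?M ` S) ` {proj z | z::complex^2. z \<noteq> 0 \<and> F (?M z) = 0}"
    proof
      fix S assume "S \<in> {proj w | w::complex^2. w \<noteq> 0 \<and> F w = 0}"
      then obtain w where w: "S = proj w" "w \<noteq> 0" "F w = 0" by auto
      obtain z where z: "?M z = w" using Mv_inv[OF det] by blast
      have "z \<noteq> 0" using z w(2) Mv_zero by metis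
      then show "S \<in> (\<lambda>S. ?M ` S) ` {proj z | z::complex^2. z \<noteq> 0 \<and> F (?M z) = 0}"
        using w z img by (intro image_eqI[of _ _ "proj z"]) auto
    qed
    show "(\<lambda>S. ?M ` S) ` {proj z | z::complex^2. z \<noteq> 0 \<and> F (?M z) = 0} \<subseteq> {proj w | w::complex^2. w \<noteq> 0 \<and> F w = 0}"
    proof
      fix S assume "S \<in> (\<lambda>S. ?M ` S) ` {proj z | z::complex^2. z \<noteq> 0 \<and> F (?M z) = 0}"
      then obtain z where z: "S = ?M ` proj z" "z \<noteq> 0" "F (?M z) = 0" by auto
      have "?M z \<noteq> 0" using z(2) inj Mv_zero by (metis injD)
      then show "S \<in> {proj w | w::complex^2. w \<noteq> 0 \<and> F w = 0}" using z img by auto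
    qed
  qed
  have "inj_on (\<lambda>S. ?M ` S) X" for X using inj by (simp add: inj_on_def inj_image_eq_iff)
  then show ?thesis unfolding eq by (simp add: card_image)
qed

lemma bcub_subst:
  "bcub p q r s (Mv m11 m12 m21 m22 z) =
   bcub (p*m11^3 + q*m11^2*m21 + r*m11*m21^2 + s*m21^3)
        (3*p*m11^2*m12 + q*(m11^2*m22 + 2*m11*m12*m21) + r*(m12*m21^2 + 2*m11*m21*m22) + 3 * s*m21^2*m22)
        (3*p*m11*m12^2 + q*(2*m11*m12*m22 + m12^2*m21) + r*(m11*m22^2 + 2*m12*m21*m22) + 3 * s*m21*m22^2)
        (p*m12^3 + q*m12^2*m22 + r*m12*m22^2 + s*m22^3) z"
  unfolding bcub_def Mv_def by simp algebra

lemma bcub_coeff_unique: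
  assumes "\<And>w. bcub p q r s w = bcub p' q' r' s' w"
  shows "p = p' \<and> q = q' \<and> r = r' \<and> s = s'"
proof -
  have a: "p = p'" using assms[of "vector [1, 0]"] unfolding bcub_def by simp
  have b: "s = s'" using assms[of "vector [0, 1]"] unfolding bcub_def by simp
  have c: "p + q + r + s = p' + q' + r' + s'" using assms[of "vector [1, 1]"] unfolding bcub_def by simp
  have d: "p - q + r - s = p' - q' + r' - s'" using assms[of "vector [1, -1]"] unfolding bcub_def by simp
  have "(p + q + r + s) - (p - q + r - s) = (p' + q' + r' + s') - (p' - q' + r' - s')" using c d by simp
  then have "2 * q + 2 * s = 2 * q' + 2 * s'" by (simp add: algebra_simps)
  then have q: "q = q'" using b by simp
  have "(p + q + r + s) + (p - q + r - s) = (p' + q' + r' + s') + (p' - q' + r' - s')" using c d by simp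
  then have "2 * p + 2 * r = 2 * p' + 2 * r'" by (simp add: algebra_simps)
  then have "r = r'" using a by simp
  note q this
  then show ?thesis using a b by simp
qed


definition Sd :: "nat \<Rightarrow> (nat \<times> nat \<times> nat) set" where
  "Sd d = {(i,j,k). i + j + k = d}"

definition mon :: "complex^3 \<Rightarrow> nat \<times> nat \<times> nat \<Rightarrow> complex" where
  "mon v = (\<lambda>(i,j,k). (v$1)^i * (v$2)^j * (v$3)^k)"

definition hp :: "nat \<Rightarrow> (complex^3 \<Rightarrow> complex) \<Rightarrow> bool" where
  "hp d f = (\<exists>c. \<forall>v. f v = (\<Sum>x\<in>Sd d. c x * mon v x))"

lemma finite_Sd: "finite (Sd d)"
proof -
  have "Sd d \<subseteq> {0..d} \<times> {0..d} \<times> {0..d}" unfolding Sd_def by auto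
  then show ?thesis by (rule finite_subset) auto
qed

lemma is_form_hp: "is_form d f \<longleftrightarrow> hp d f \<and> (\<exists>v. f v \<noteq> 0)"
proof -
  have A: "(\<Sum>(i,j,k)\<in>{(i,j,k). i + j + k = d}. c i j k * (v$1)^i * (v$2)^j * (v$3)^k)
      = (\<Sum>x\<in>Sd d. (\<lambda>(i,j,k). c i j k) x * mon v x)" for c v
    unfolding Sd_def mon_def by (rule sum.cong) (auto simp: mult.assoc)
  have B: "(\<Sum>x\<in>Sd d. c x * mon v x)
      = (\<Sum>(i,j,k)\<in>{(i,j,k). i + j + k = d}. (\<lambda>i j k. c (i,j,k)) i j k * (v$1)^i * (v$2)^j * (v$3)^k)" for c v
    unfolding Sd_def mon_def by (rule sum.cong) (auto simp: mult.assoc)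
  have "(\<exists>c :: nat \<Rightarrow> nat \<Rightarrow> nat \<Rightarrow> complex.
        \<forall>v. f v = (\<Sum>(i,j,k)\<in>{(i,j,k). i + j + k = d}. c i j k * (v$1)^i * (v$2)^j * (v$3)^k))
        \<longleftrightarrow> hp d f"
  proof
    assume "\<exists>c :: nat \<Rightarrow> nat \<Rightarrow> nat \<Rightarrow> complex.
        \<forall>v. f v = (\<Sum>(i,j,k)\<in>{(i,j,k). i + j + k = d}. c i j k * (v$1)^i * (v$2)^j * (v$3)^k)"
    then obtain c :: "nat \<Rightarrow> nat \<Rightarrow> nat \<Rightarrow> complex" where
      "\<forall>v. f v = (\<Sum>(i,j,k)\<in>{(i,j,k). i + j + k = d}. c i j k * (v$1)^i * (v$2)^j * (v$3)^k)" by blast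
    then have "\<forall>v. f v = (\<Sum>x\<in>Sd d. (\<lambda>(i,j,k). c i j k) x * mon v x)" using A by simp
    then show "hp d f" unfolding hp_def by blast
  next
    assume "hp d f"
    then obtain c where "\<forall>v. f v = (\<Sum>x\<in>Sd d. c x * mon v x)" unfolding hp_def by blast
    then have "\<forall>v. f v = (\<Sum>(i,j,k)\<in>{(i,j,k). i + j + k = d}. (\<lambda>i j k. c (i,j,k)) i j k * (v$1)^i * (v$2)^j * (v$3)^k)"
      using B by simp
    then show "\<exists>c :: nat \<Rightarrow> nat \<Rightarrow> nat \<Rightarrow> complex.
        \<forall>v. f v = (\<Sum>(i,j,k)\<in>{(i,j,k). i + j + k = d}. c i j k * (v$1)^i * (v$2)^j * (v$3)^k)"
      by (rule exI[of _ "\<lambda>i j k. c (i,j,k)"])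
  qed
  then show ?thesis unfolding is_form_def by blast
qed

lemma hp_const: "hp 0 (\<lambda>v. a)"
proof -
  have "Sd 0 = {(0,0,0)}" unfolding Sd_def by auto
  then show ?thesis unfolding hp_def mon_def by (intro exI[of _ "\<lambda>_. a"]) simp
qed

lemma hp_add: "hp d f \<Longrightarrow> hp d g \<Longrightarrow> hp d (\<lambda>v. f v + g v)"
  unfolding hp_def
proof (elim exE)
  fix c c' assume "\<forall>v. f v = (\<Sum>x\<in>Sd d. c x * mon v x)" "\<forall>v. g v = (\<Sum>x\<in>Sd d. c' x * mon v x)"
  then show "\<exists>c. \<forall>v. f v + g v = (\<Sum>x\<in>Sd d. c x * mon v x)"
    by (intro exI[of _ "\<lambda>x. c x + c' x"]) (simp add: sum.distrib distrib_right)
qed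

lemma hp_smult: "hp d f \<Longrightarrow> hp d (\<lambda>v. a * f v)"
  unfolding hp_def
proof (elim exE)
  fix c assume "\<forall>v. f v = (\<Sum>x\<in>Sd d. c x * mon v x)"
  then show "\<exists>c. \<forall>v. a * f v = (\<Sum>x\<in>Sd d. c x * mon v x)"
    by (intro exI[of _ "\<lambda>x. a * c x"]) (simp add: sum_distrib_left mult.assoc)
qed

lemma hp_shift:
  fixes sh :: "nat \<times> nat \<times> nat \<Rightarrow> nat \<times> nat \<times> nat" and var :: "complex^3 \<Rightarrow> complex"
  assumes inj: "inj sh"
    and img: "sh ` Sd d = {x \<in> Sd (Suc d). P x}"
    and mon_sh: "\<And>v x. mon v (sh x) = var v * mon v x"
    and hf: "hp d f"
  shows "hp (Suc d) (\<lambda>v. var v * f v)"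
proof -
  obtain c where c: "\<And>v. f v = (\<Sum>x\<in>Sd d. c x * mon v x)" using hf unfolding hp_def by blast
  define c' where "c' = (\<lambda>y. if y \<in> sh ` Sd d then c (inv sh y) else 0)"
  have "var v * f v = (\<Sum>x\<in>Sd (Suc d). c' x * mon v x)" for v
  proof -
    have "var v * f v = (\<Sum>x\<in>Sd d. c x * mon v (sh x))"
      unfolding c by (simp add: sum_distrib_left mon_sh mult.commute mult.left_commute)
    also have "\<dots> = (\<Sum>x\<in>Sd d. c' (sh x) * mon v (sh x))"
      by (simp add: c'_def inv_f_f[OF inj])
    also have "\<dots> = (\<Sum>y\<in>sh ` Sd d. c' y * mon v y)"
    proof -
      have ij: "inj_on sh (Sd d)" using inj unfolding inj_def inj_on_def by blast
      show ?thesis by (simp add: sum.reindex[OF ij] o_def)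
    qed
    also have "\<dots> = (\<Sum>y\<in>Sd (Suc d). c' y * mon v y)"
      by (rule sum.mono_neutral_left) (auto simp: finite_Sd img c'_def)
    finally show ?thesis .
  qed
  then show ?thesis unfolding hp_def by blast
qed

lemma hp_mul1: "hp d f \<Longrightarrow> hp (Suc d) (\<lambda>v. v$1 * f v)"
proof (rule hp_shift[where sh = "\<lambda>(i,j,k). (Suc i, j, k)" and P = "\<lambda>x. fst x > 0"])
  show "(\<lambda>(i,j,k). (Suc i, j, k)) ` Sd d = {x \<in> Sd (Suc d). (\<lambda>x. fst x > 0) x}"
  proof
    show "(\<lambda>(i,j,k). (Suc i, j, k)) ` Sd d \<subseteq> {x \<in> Sd (Suc d). (\<lambda>x. fst x > 0) x}" by (auto simp: Sd_def)
    show "{x \<in> Sd (Suc d). (\<lambda>x. fst x > 0) x} \<subseteq> (\<lambda>(i,j,k). (Suc i, j, k)) ` Sd d"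
    proof
      fix x assume x: "x \<in> {x \<in> Sd (Suc d). (\<lambda>x. fst x > 0) x}"
      obtain i j k where ijk: "x = (i,j,k)" by (cases x) auto
      show "x \<in> (\<lambda>(i,j,k). (Suc i, j, k)) ` Sd d"
        using x unfolding ijk by (intro image_eqI[of _ _ "(i - 1, j, k)"]) (auto simp: Sd_def)
    qed
  qed
qed (auto simp: inj_def mon_def split: prod.splits)

lemma hp_mul2: "hp d f \<Longrightarrow> hp (Suc d) (\<lambda>v. v$2 * f v)"
proof (rule hp_shift[where sh = "\<lambda>(i,j,k). (i, Suc j, k)" and P = "\<lambda>x. fst (snd x) > 0"])
  show "(\<lambda>(i,j,k). (i, Suc j, k)) ` Sd d = {x \<in> Sd (Suc d). (\<lambda>x. fst (snd x) > 0) x}"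
  proof
    show "(\<lambda>(i,j,k). (i, Suc j, k)) ` Sd d \<subseteq> {x \<in> Sd (Suc d). (\<lambda>x. fst (snd x) > 0) x}" by (auto simp: Sd_def)
    show "{x \<in> Sd (Suc d). (\<lambda>x. fst (snd x) > 0) x} \<subseteq> (\<lambda>(i,j,k). (i, Suc j, k)) ` Sd d"
    proof
      fix x assume x: "x \<in> {x \<in> Sd (Suc d). (\<lambda>x. fst (snd x) > 0) x}"
      obtain i j k where ijk: "x = (i,j,k)" by (cases x) auto
      show "x \<in> (\<lambda>(i,j,k). (i, Suc j, k)) ` Sd d"
        using x unfolding ijk by (intro image_eqI[of _ _ "(i, j - 1, k)"]) (auto simp: Sd_def)
    qed
  qed
qed (auto simp: inj_def mon_def split: prod.splits)

lemma hp_mul3: "hp d f \<Longrightarrow> hp (Suc d) (\<lambda>v. v$3 * f v)"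
proof (rule hp_shift[where sh = "\<lambda>(i,j,k). (i, j, Suc k)" and P = "\<lambda>x. snd (snd x) > 0"])
  show "(\<lambda>(i,j,k). (i, j, Suc k)) ` Sd d = {x \<in> Sd (Suc d). (\<lambda>x. snd (snd x) > 0) x}"
  proof
    show "(\<lambda>(i,j,k). (i, j, Suc k)) ` Sd d \<subseteq> {x \<in> Sd (Suc d). (\<lambda>x. snd (snd x) > 0) x}" by (auto simp: Sd_def)
    show "{x \<in> Sd (Suc d). (\<lambda>x. snd (snd x) > 0) x} \<subseteq> (\<lambda>(i,j,k). (i, j, Suc k)) ` Sd d"
    proof
      fix x assume x: "x \<in> {x \<in> Sd (Suc d). (\<lambda>x. snd (snd x) > 0) x}"
      obtain i j k where ijk: "x = (i,j,k)" by (cases x) auto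
      show "x \<in> (\<lambda>(i,j,k). (i, j, Suc k)) ` Sd d"
        using x unfolding ijk by (intro image_eqI[of _ _ "(i, j, k - 1)"]) (auto simp: Sd_def)
    qed
  qed
qed (auto simp: inj_def mon_def split: prod.splits)

lemma hp_mullin: "hp d f \<Longrightarrow> hp (Suc d) (\<lambda>v. dot3 n v * f v)"
proof -
  assume h: "hp d f"
  have "hp (Suc d) (\<lambda>v. n$1 * (v$1 * f v) + (n$2 * (v$2 * f v) + n$3 * (v$3 * f v)))"
    by (intro hp_add hp_smult hp_mul1 hp_mul2 hp_mul3 h)
  then show ?thesis unfolding dot3_def by (simp add: algebra_simps)
qed


definition f0 :: "complex^3 \<Rightarrow> complex" where
  "f0 v = 4*(v$3)^3 + 27 * v$1 * (v$2)^2"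

definition fc1 :: "complex^3 \<Rightarrow> complex^3 \<Rightarrow> complex" where
  "fc1 P Q = 12*(P$3)^2*Q$3 + 27*Q$1*(P$2)^2 + 54*P$1*P$2*Q$2"

definition fc2 :: "complex^3 \<Rightarrow> complex^3 \<Rightarrow> complex" where
  "fc2 P Q = 12*P$3*(Q$3)^2 + 54*Q$1*P$2*Q$2 + 27*P$1*(Q$2)^2"

lemma f0_exp: "f0 (P + s *s Q) = f0 P + fc1 P Q * s + fc2 P Q * s^2 + f0 Q * s^3"
  unfolding f0_def fc1_def fc2_def by simp algebra

lemma lt2_all: "(\<forall>i<(2::nat). P i) \<longleftrightarrow> P 0 \<and> P 1"
  by (auto simp: less_Suc_eq numeral_2_eq_2)

lemma lt3_all: "(\<forall>i<(3::nat). P i) \<longleftrightarrow> P 0 \<and> P 1 \<and> P 2"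
  by (auto simp: less_Suc_eq numeral_3_eq_3 numeral_2_eq_2)

lemma contact_poly:
  assumes "\<And>s. f (P + s *s Q) = c0 + c1 * s + c2 * s^2 + c3 * s^3"
  shows "contact f P Q k \<longleftrightarrow> (\<forall>i<k. coeff [:c0, c1, c2, c3:] i = 0)"
proof -
  have pp: "f (P + s *s Q) = poly [:c0, c1, c2, c3:] s" for s
    using assms[of s] by (simp add: algebra_simps power2_eq_square power3_eq_cube)
  have "contact f P Q k \<longleftrightarrow> [:0, 1:] ^ k dvd [:c0, c1, c2, c3:]"
  proof
    assume "contact f P Q k"
    then obtain p where p: "\<forall>s. f (P + s *s Q) = poly p s" "[:0, 1:] ^ k dvd p" unfolding contact_def by blast
    have "poly p = poly [:c0, c1, c2, c3:]" using p(1) pp by auto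
    then have "p = [:c0, c1, c2, c3:]" by (simp add: poly_eq_poly_eq_iff)
    then show "[:0, 1:] ^ k dvd [:c0, c1, c2, c3:]" using p(2) by simp
  next
    assume "[:0, 1:] ^ k dvd [:c0, c1, c2, c3:]"
    then show "contact f P Q k" unfolding contact_def using pp by blast
  qed
  also have "\<dots> \<longleftrightarrow> monom 1 k dvd [:c0, c1, c2, c3:]" by (simp add: monom_altdef)
  also have "\<dots> \<longleftrightarrow> (\<forall>i<k. coeff [:c0, c1, c2, c3:] i = 0)" by (rule monom_1_dvd_iff')
  finally show ?thesis .
qed

lemma contact_f0_2: "contact f0 P Q 2 \<longleftrightarrow> f0 P = 0 \<and> fc1 P Q = 0"
  using contact_poly[of f0 P Q "f0 P" "fc1 P Q" "fc2 P Q" "f0 Q" 2] f0_exp by (simp add: lt2_all)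

lemma contact_f0_3: "contact f0 P Q 3 \<longleftrightarrow> f0 P = 0 \<and> fc1 P Q = 0 \<and> fc2 P Q = 0"
  using contact_poly[of f0 P Q "f0 P" "fc1 P Q" "fc2 P Q" "f0 Q" 3] f0_exp by (simp add: lt3_all numeral_2_eq_2)

definition e1 :: "complex^3" where "e1 = vector [1, 0, 0]"
definition e2 :: "complex^3" where "e2 = vector [0, 1, 0]"
definition e3 :: "complex^3" where "e3 = vector [0, 0, 1]"

lemma indep2_iff: "indep2 P Q \<longleftrightarrow> (\<forall>a b. a *s P + b *s Q = 0 \<longrightarrow> a = 0 \<and> b = 0)"
  by (simp add: indep2_def)

lemma indep2_e23: "indep2 e2 e3" unfolding indep2_def e2_def e3_def by (simp add: vec3_eq)
lemma indep2_e21: "indep2 e2 e1" unfolding indep2_def e2_def e1_def by (simp add: vec3_eq)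
lemma indep2_e13: "indep2 e1 e3" unfolding indep2_def e1_def e3_def by (simp add: vec3_eq)

lemma e_nz: "e1 \<noteq> 0" "e2 \<noteq> 0" "e3 \<noteq> 0" unfolding e1_def e2_def e3_def by (simp_all add: vec3_eq)

lemma singular_f0: "singular_pt f0 P \<longleftrightarrow> P \<noteq> 0 \<and> f0 P = 0 \<and> (\<forall>Q. indep2 P Q \<longrightarrow> fc1 P Q = 0)"
  unfolding singular_pt_def contact_f0_2 by auto

lemma lineset_e1: 
  assumes "indep2 e1 Q" "Q$2 = 0"
  shows "lineset e1 Q = lineset e1 e3"
proof -
  have q3: "Q$3 \<noteq> 0"
  proof
    assume "Q$3 = 0"
    then have "(Q$1) *s e1 + (-1) *s Q = 0" using assms(2) unfolding e1_def by (simp add: vec3_eq)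
    then show False using assms(1) unfolding indep2_def by fastforce
  qed
  have 1: "a *s e1 + b *s Q = (a + b * Q$1) *s e1 + (b * Q$3) *s e3" for a b
    using assms(2) unfolding e1_def e3_def by (simp add: vec3_eq algebra_simps)
  have 2: "a *s e1 + b *s e3 = (a - b / Q$3 * Q$1) *s e1 + (b / Q$3) *s Q" for a b
    using assms(2) q3 unfolding e1_def e3_def by (simp add: vec3_eq field_simps)
  show ?thesis unfolding lineset_def
  proof (rule set_eqI, rule iffI)
    fix S assume "S \<in> {proj (a *s e1 + b *s Q) |a b. (a, b) \<noteq> (0, 0)}"
    then obtain a b where ab: "S = proj (a *s e1 + b *s Q)" "(a, b) \<noteq> (0, 0)" by blast
    have nz: "(a + b * Q$1, b * Q$3) \<noteq> (0, 0)" using ab(2) q3 by auto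
    have "S = proj ((a + b * Q$1) *s e1 + (b * Q$3) *s e3)" using ab(1) 1 by simp
    then show "S \<in> {proj (a *s e1 + b *s e3) |a b. (a, b) \<noteq> (0, 0)}" using nz by blast
  next
    fix S assume "S \<in> {proj (a *s e1 + b *s e3) |a b. (a, b) \<noteq> (0, 0)}"
    then obtain a b where ab: "S = proj (a *s e1 + b *s e3)" "(a, b) \<noteq> (0, 0)" by blast
    have nz: "(a - b / Q$3 * Q$1, b / Q$3) \<noteq> (0, 0)" using ab(2) q3 by auto
    have "S = proj ((a - b / Q$3 * Q$1) *s e1 + (b / Q$3) *s Q)" using ab(1) 2 by simp
    then show "S \<in> {proj (a *s e1 + b *s Q) |a b. (a, b) \<noteq> (0, 0)}" using nz by blast
  qed
qed

lemma cusp_f0: "cusp_pt f0 e1"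
  unfolding cusp_pt_def
proof (intro conjI exI[of _ e3] allI impI)
  show "singular_pt f0 e1" unfolding singular_f0 using e_nz
    by (simp add: f0_def fc1_def e1_def)
  show "indep2 e1 e3" by (rule indep2_e13)
  show "contact f0 e1 e3 3" unfolding contact_f0_3 by (simp add: f0_def fc1_def fc2_def e1_def e3_def)
  fix Q' assume "indep2 e1 Q' \<and> contact f0 e1 Q' 3"
  then have "indep2 e1 Q'" "fc2 e1 Q' = 0" unfolding contact_f0_3 by auto
  then show "lineset e1 Q' = lineset e1 e3" using lineset_e1 by (simp add: fc2_def e1_def)
qed

lemma flex_f0: "flex_pt f0 e2"
  unfolding flex_pt_def smooth_pt_def singular_f0
proof (intro conjI exI[of _ e3])
  show "e2 \<noteq> 0" by (rule e_nz)
  show "f0 e2 = 0" by (simp add: f0_def e2_def)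
  show "\<not> (e2 \<noteq> 0 \<and> f0 e2 = 0 \<and> (\<forall>Q. indep2 e2 Q \<longrightarrow> fc1 e2 Q = 0))"
    using indep2_e21 by (auto simp: fc1_def e1_def e2_def intro!: exI[of _ e1])
  show "indep2 e2 e3" by (rule indep2_e23)
  show "contact f0 e2 e3 3" unfolding contact_f0_3 by (simp add: f0_def fc1_def fc2_def e2_def e3_def)
qed

lemma contact_f0_e23: "contact f0 e2 e3 2"
  unfolding contact_f0_2 by (simp add: f0_def fc1_def e2_def e3_def)

lemma flex_f0_unique:
  assumes "flex_pt f0 P" shows "proj P = proj e2"
proof -
  from assms obtain Q where sm: "smooth_pt f0 P" and Q: "indep2 P Q" "contact f0 P Q 3"
    unfolding flex_pt_def by blast
  have P0: "P \<noteq> 0" "f0 P = 0" and ns: "\<not> singular_pt f0 P" using sm unfolding smooth_pt_def by auto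
  have c: "fc1 P Q = 0" "fc2 P Q = 0" using Q(2) unfolding contact_f0_3 by auto
  have key: "12 * P$3 * (P$2 * Q$3 - P$3 * Q$2)^2 = 0"
  proof -
    have "12 * P$3 * (P$2 * Q$3 - P$3 * Q$2)^2 = (P$2)^2 * fc2 P Q - 2 * P$2 * Q$2 * fc1 P Q + 3 * (Q$2)^2 * f0 P"
      unfolding fc1_def fc2_def f0_def by algebra
    then show ?thesis using c P0 by simp
  qed
  show ?thesis
  proof (cases "P$3 = 0")
    case True
    then have "P$1 * (P$2)^2 = 0" using P0(2) by (simp add: f0_def)
    then have "P$1 = 0 \<or> P$2 = 0" by simp
    then show ?thesis
    proof
      assume "P$1 = 0"
      then have "P = (P$2) *s e2" using True by (simp add: vec3_eq e2_def)
      moreover have "P$2 \<noteq> 0" using P0(1) True \<open>P$1 = 0\<close> by (auto simp: vec3_eq)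
      ultimately show ?thesis using proj_scale by metis
    next
      assume "P$2 = 0"
      then have "singular_pt f0 P" unfolding singular_f0 using P0 True by (simp add: fc1_def)
      then show ?thesis using ns by simp
    qed
  next
    case False
    then have p2: "P$2 \<noteq> 0" using P0(2) by (auto simp: f0_def)
    have e3': "P$2 * Q$3 = P$3 * Q$2" using key False by simp
    have "27 * (P$2)^2 * (P$2 * Q$1 - Q$2 * P$1) = 0"
    proof -
      have "27 * (P$2)^2 * (P$2 * Q$1 - Q$2 * P$1) = P$2 * fc1 P Q - 3 * Q$2 * f0 P - 12 * (P$3)^2 * (P$2 * Q$3 - P$3 * Q$2)"
        unfolding fc1_def f0_def by algebra
      then show ?thesis using c P0 e3' by simp
    qed
    then have e1': "P$2 * Q$1 = Q$2 * P$1" using p2 by simp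
    have "(Q$2) *s P + (- P$2) *s Q = 0" using e1' e3' by (simp add: vec3_eq algebra_simps)
    then have "P$2 = 0" using Q(1) unfolding indep2_def by fastforce
    then show ?thesis using p2 by simp
  qed
qed

lemma det3_dot_cross: "det3 a b c = dot3 (cross3 a b) c"
  unfolding det3_def dot3_def cross3_def by (simp add: algebra_simps)

lemma cross_nz: assumes "indep2 u1 u2" shows "cross3 u1 u2 \<noteq> 0"
proof
  assume "cross3 u1 u2 = 0"
  then have "det3 u1 u2 Y = 0" for Y by (simp add: det3_dot_cross dot3_def)
  then show False using indep_det[OF assms] by blast
qed

lemma noline_gen:
  assumes "indep2 u1 u2" and H: "\<And>n. n \<noteq> 0 \<Longrightarrow> \<exists>v. dot3 n v = 0 \<and> F v \<noteq> 0"
  shows "\<exists>a b. F (a *s u1 + b *s u2) \<noteq> 0"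
proof -
  obtain v where v: "dot3 (cross3 u1 u2) v = 0" "F v \<noteq> 0" using H[OF cross_nz[OF assms(1)]] by blast
  have "det3 u1 u2 v = 0" using v(1) by (simp add: det3_dot_cross)
  then obtain a b where "v = a *s u1 + b *s u2" using indep_solve[OF assms(1)] by blast
  then show ?thesis using v(2) by blast
qed

lemma f0_noline_normal:
  assumes "(n::complex^3) \<noteq> 0" shows "\<exists>v. dot3 n v = 0 \<and> f0 v \<noteq> 0"
proof (cases "n$1 = 0")
  case False
  show ?thesis using False
    by (intro exI[of _ "vector [- n$3 / n$1, 0, 1]"]) (simp add: dot3_def f0_def field_simps)
next
  case n1: True
  show ?thesis
  proof (cases "n$2 = 0")
    case False
    show ?thesis using False n1
      by (intro exI[of _ "vector [0, - n$3 / n$2, 1]"]) (simp add: dot3_def f0_def field_simps)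
  next
    case True
    show ?thesis using True n1
      by (intro exI[of _ "vector [1, 1, 0]"]) (simp add: dot3_def f0_def field_simps)
  qed
qed


definition Nm :: "complex^3 \<Rightarrow> complex^3 \<Rightarrow> complex^3 \<Rightarrow> complex^3 \<Rightarrow> complex^3" where
  "Nm n1 n2 n3 t = vector [dot3 n1 t, dot3 n2 t, dot3 n3 t]"

lemma dot3_lin: "dot3 n (a *s x + b *s y) = a * dot3 n x + b * dot3 n y"
  unfolding dot3_def by (simp add: algebra_simps)

lemma Nm_lin: "Nm n1 n2 n3 (a *s x + b *s y) = a *s Nm n1 n2 n3 x + b *s Nm n1 n2 n3 y"
  unfolding Nm_def by (simp add: vec3_eq dot3_lin)

lemma Nm_linear: "linear (Nm n1 n2 n3)"
proof (rule linearI)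
  show "Nm n1 n2 n3 (x + y) = Nm n1 n2 n3 x + Nm n1 n2 n3 y" for x y
    unfolding Nm_def dot3_def by (simp add: vec3_eq algebra_simps)
  show "Nm n1 n2 n3 (c *\<^sub>R x) = c *\<^sub>R Nm n1 n2 n3 x" for c x
    unfolding Nm_def dot3_def by (simp add: vec3_eq) (simp add: scaleR_conv_of_real algebra_simps)
qed

lemma Nm_surj: "inj (Nm n1 n2 n3) \<Longrightarrow> surj (Nm n1 n2 n3)"
  using linear_injective_imp_surjective Nm_linear by blast

locale goodN =
  fixes N :: "complex^3 \<Rightarrow> complex^3"
  assumes lin: "\<And>a b x y. N (a *s x + b *s y) = a *s N x + b *s N y"
    and inj: "inj N" and surj: "surj N"
begin

lemma N0: "N 0 = 0"
  using lin[of 0 0 0 0] by simp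

lemma Nsm: "N (a *s x) = a *s N x"
  using lin[of a x 0 0] by simp

lemma Nadd: "N (x + s *s y) = N x + s *s N y"
  using lin[of 1 x s y] by simp

lemma Nnz: "N x = 0 \<longleftrightarrow> x = 0"
  using inj N0 by (metis injD)

lemma Nproj: "N ` proj x = proj (N x)"
proof
  show "N ` proj x \<subseteq> proj (N x)" by (force simp: mem_proj Nsm)
  show "proj (N x) \<subseteq> N ` proj x"
  proof
    fix y assume "y \<in> proj (N x)"
    then obtain c where "c \<noteq> 0" "y = c *s N x" by (auto simp: mem_proj)
    then show "y \<in> N ` proj x" by (intro image_eqI[of _ _ "c *s x"]) (auto simp: Nsm mem_proj)
  qed
qed

lemma Nindep: "indep2 P Q \<longleftrightarrow> indep2 (N P) (N Q)"
  unfolding indep2_def using lin Nnz by (metis (no_types))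

lemma Ncontact: "contact (\<lambda>v. f (N v)) P Q k \<longleftrightarrow> contact f (N P) (N Q) k"
  unfolding contact_def by (simp add: Nadd)

lemma Nex: "\<exists>x. N x = y"
  using surj by (metis surjD)

lemma Nsingular: "singular_pt (\<lambda>v. f (N v)) P \<longleftrightarrow> singular_pt f (N P)"
proof
  assume s: "singular_pt (\<lambda>v. f (N v)) P"
  show "singular_pt f (N P)" unfolding singular_pt_def
  proof (intro conjI allI impI)
    show "N P \<noteq> 0" using s Nnz unfolding singular_pt_def by auto
    show "f (N P) = 0" using s unfolding singular_pt_def by auto
    fix Q' assume q: "indep2 (N P) Q'"
    obtain Q where Q: "N Q = Q'" using Nex by blast
    have "indep2 P Q" using q Q by (simp add: Nindep[of P Q])
    then have "contact (\<lambda>v. f (N v)) P Q 2" using s unfolding singular_pt_def by auto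
    then show "contact f (N P) Q' 2" using Q Ncontact by simp
  qed
next
  assume s: "singular_pt f (N P)"
  show "singular_pt (\<lambda>v. f (N v)) P" unfolding singular_pt_def
  proof (intro conjI allI impI)
    show "P \<noteq> 0" using s N0 unfolding singular_pt_def by auto
    show "f (N P) = 0" using s unfolding singular_pt_def by auto
    fix Q assume q: "indep2 P Q"
    then have "contact f (N P) (N Q) 2" using s Nindep[of P Q] unfolding singular_pt_def by auto
    then show "contact (\<lambda>v. f (N v)) P Q 2" using Ncontact by simp
  qed
qed

lemma Nsmooth: "smooth_pt (\<lambda>v. f (N v)) P \<longleftrightarrow> smooth_pt f (N P)"
  unfolding smooth_pt_def Nsingular using Nnz by auto

lemma Nflex: "flex_pt (\<lambda>v. f (N v)) P \<longleftrightarrow> flex_pt f (N P)"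
proof
  assume "flex_pt (\<lambda>v. f (N v)) P"
  then obtain Q where "smooth_pt f (N P)" "indep2 P Q" "contact (\<lambda>v. f (N v)) P Q 3"
    unfolding flex_pt_def Nsmooth by blast
  then show "flex_pt f (N P)" unfolding flex_pt_def using Nindep Ncontact by blast
next
  assume "flex_pt f (N P)"
  then obtain Q' where a: "smooth_pt f (N P)" "indep2 (N P) Q'" "contact f (N P) Q' 3"
    unfolding flex_pt_def by blast
  obtain Q where Q: "N Q = Q'" using Nex by blast
  show "flex_pt (\<lambda>v. f (N v)) P" unfolding flex_pt_def Nsmooth
    using a Q Nindep Ncontact by blast
qed

lemma Nlineset: "lineset (N P) (N Q) = (\<lambda>S. N ` S) ` lineset P Q"
proof -
  have "lineset (N P) (N Q) = {proj (N (a *s P + b *s Q)) |a b. (a, b) \<noteq> (0, 0)}"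
    unfolding lineset_def by (simp add: lin)
  also have "\<dots> = {N ` proj (a *s P + b *s Q) |a b. (a, b) \<noteq> (0, 0)}" by (simp add: Nproj)
  also have "\<dots> = (\<lambda>S. N ` S) ` lineset P Q" unfolding lineset_def by blast
  finally show ?thesis .
qed

lemma Nimg_inj: "inj (\<lambda>S. N ` S)"
  using inj by (simp add: inj_def inj_image_eq_iff)

lemma Nlineset_eq: "lineset (N P) (N Q') = lineset (N P) (N Q) \<longleftrightarrow> lineset P Q' = lineset P Q"
  unfolding Nlineset using Nimg_inj by (simp add: inj_image_eq_iff)

lemma Ncusp: "cusp_pt f (N P) \<Longrightarrow> cusp_pt (\<lambda>v. f (N v)) P"
proof -
  assume c: "cusp_pt f (N P)"
  then obtain Q' where s: "singular_pt f (N P)" and q: "indep2 (N P) Q'" "contact f (N P) Q' 3"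
    and u: "\<And>R. indep2 (N P) R \<and> contact f (N P) R 3 \<Longrightarrow> lineset (N P) R = lineset (N P) Q'"
    unfolding cusp_pt_def by blast
  obtain Q where Q: "N Q = Q'" using Nex by blast
  show "cusp_pt (\<lambda>v. f (N v)) P" unfolding cusp_pt_def
  proof (intro conjI exI[of _ Q] allI impI)
    show "singular_pt (\<lambda>v. f (N v)) P" using s Nsingular by simp
    show "indep2 P Q" using q Q by (simp add: Nindep[of P Q])
    show "contact (\<lambda>v. f (N v)) P Q 3" using q Q Ncontact by simp
    fix R assume "indep2 P R \<and> contact (\<lambda>v. f (N v)) P R 3"
    then have "lineset (N P) (N R) = lineset (N P) (N Q)" using u Q Nindep[of P R] Ncontact by simp
    then show "lineset P R = lineset P Q" using Nlineset_eq by simp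
  qed
qed

lemma Nprojeq: "proj (N x) = proj (N y) \<Longrightarrow> proj x = proj y"
proof -
  assume "proj (N x) = proj (N y)"
  then obtain c where c: "c \<noteq> 0" "N y = c *s N x" by (auto simp: proj_eq_iff)
  then have "N y = N (c *s x)" by (simp add: Nsm)
  then have "y = c *s x" using inj by (simp add: inj_eq)
  then show ?thesis using c(1) by (auto simp: proj_eq_iff)
qed

end

lemma goodN_Nm: "inj (Nm n1 n2 n3) \<Longrightarrow> goodN (Nm n1 n2 n3)"
  unfolding goodN_def using Nm_lin Nm_surj by blast


lemma Sd1: "Sd 1 = {(1,0,0), (0,1,0), (0,0,1)}"
  unfolding Sd_def by (auto simp: add_is_1)

lemma form1_lin:
  assumes "is_form 1 l" shows "\<exists>c. c \<noteq> 0 \<and> (\<forall>v. l v = dot3 c v)"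
proof -
  obtain c where c: "\<And>v. l v = (\<Sum>x\<in>Sd 1. c x * mon v x)" and nz: "\<exists>v. l v \<noteq> 0"
    using assms unfolding is_form_hp hp_def by blast
  define cv :: "complex^3" where "cv = vector [c (1,0,0), c (0,1,0), c (0,0,1)]"
  have "l v = dot3 cv v" for v unfolding c Sd1 cv_def dot3_def mon_def by simp
  moreover have "cv \<noteq> 0"
  proof
    assume "cv = 0" then have "l v = 0" for v using \<open>\<And>v. l v = dot3 cv v\<close> by (simp add: dot3_def)
    then show False using nz by blast
  qed
  ultimately show ?thesis by blast
qed

lemma kernel2:
  assumes "(c::complex^3) \<noteq> 0" shows "\<exists>u1 u2. indep2 u1 u2 \<and> dot3 c u1 = 0 \<and> dot3 c u2 = 0"
proof (cases "c$1 = 0")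
  case False
  have "indep2 (vector [- c$2, c$1, 0]) (vector [- c$3, 0, c$1])"
    unfolding indep2_def using False by (auto simp: vec3_eq)
  then show ?thesis by (intro exI[of _ "vector [- c$2, c$1, 0]"] exI[of _ "vector [- c$3, 0, c$1]"]) (simp add: dot3_def algebra_simps)
next
  case c1: True
  show ?thesis
  proof (cases "c$2 = 0")
    case False
    have "indep2 (vector [1, 0, 0]) (vector [0, - c$3, c$2])"
      unfolding indep2_def using False by (auto simp: vec3_eq)
    then show ?thesis using c1 by (intro exI[of _ "vector [1, 0, 0]"] exI[of _ "vector [0, - c$3, c$2]"]) (simp add: dot3_def algebra_simps)
  next
    case True
    have "indep2 (vector [1, 0, 0]) (vector [0, 1, 0])"
      unfolding indep2_def by (auto simp: vec3_eq)
    then show ?thesis using c1 True by (intro exI[of _ "vector [1, 0, 0]"] exI[of _ "vector [0, 1, 0]"]) (simp add: dot3_def)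
  qed
qed

lemma hp3_f0N: "hp 3 (\<lambda>v. f0 (Nm n1 n2 n3 v))"
proof -
  have "hp (Suc (Suc (Suc 0))) (\<lambda>v. dot3 n3 v * (dot3 n3 v * (dot3 n3 v * 4)) + dot3 n1 v * (dot3 n2 v * (dot3 n2 v * 27)))"
    by (intro hp_add hp_mullin hp_const)
  moreover have "f0 (Nm n1 n2 n3 v) = dot3 n3 v * (dot3 n3 v * (dot3 n3 v * 4)) + dot3 n1 v * (dot3 n2 v * (dot3 n2 v * 27))" for v
    unfolding f0_def Nm_def by (simp add: algebra_simps power2_eq_square power3_eq_cube)
  ultimately show ?thesis by (simp add: numeral_3_eq_3)
qed

lemma cubic_package:
  assumes inj: "inj (Nm n1 n2 n3)"
  shows "\<exists>Pf Qf. cuspidal_cubic (\<lambda>v. f0 (Nm n1 n2 n3 v)) \<and> flex_pt (\<lambda>v. f0 (Nm n1 n2 n3 v)) Pf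
     \<and> (\<forall>P'. flex_pt (\<lambda>v. f0 (Nm n1 n2 n3 v)) P' \<longrightarrow> proj P' = proj Pf)
     \<and> indep2 Pf Qf \<and> contact (\<lambda>v. f0 (Nm n1 n2 n3 v)) Pf Qf 2
     \<and> lineset Pf Qf = {proj t | t. t \<noteq> 0 \<and> dot3 n1 t = 0}"
proof -
  let ?N = "Nm n1 n2 n3"
  let ?f = "\<lambda>v. f0 (?N v)"
  interpret goodN ?N by (rule goodN_Nm[OF inj])
  obtain Pc where Pc: "?N Pc = e1" using Nex by blast
  obtain Pf where Pf: "?N Pf = e2" using Nex by blast
  obtain Qf where Qf: "?N Qf = e3" using Nex by blast
  obtain V3 where V3: "?N V3 = e3" using Nex by blast
  have form: "is_form 3 ?f" unfolding is_form_hp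
    using hp3_f0N V3 by (auto simp: f0_def e3_def intro!: exI[of _ V3])
  have irr: "\<not> (\<exists>l g. is_form 1 l \<and> is_form 2 g \<and> (\<forall>v. ?f v = l v * g v))"
  proof
    assume "\<exists>l g. is_form 1 l \<and> is_form 2 g \<and> (\<forall>v. ?f v = l v * g v)"
    then obtain l g where l: "is_form 1 l" and fg: "\<And>v. ?f v = l v * g v" by blast
    obtain c where c: "c \<noteq> 0" "\<And>v. l v = dot3 c v" using form1_lin[OF l] by blast
    obtain u1 u2 where u: "indep2 u1 u2" "dot3 c u1 = 0" "dot3 c u2 = 0" using kernel2[OF c(1)] by blast
    have "indep2 (?N u1) (?N u2)" using u(1) Nindep by blast
    then obtain a b where ab: "f0 (a *s ?N u1 + b *s ?N u2) \<noteq> 0"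
      using noline_gen f0_noline_normal by blast
    have "f0 (a *s ?N u1 + b *s ?N u2) = ?f (a *s u1 + b *s u2)" by (simp add: lin)
    also have "\<dots> = 0" unfolding fg c(2) dot3_lin u by simp
    finally show False using ab by simp
  qed
  have cc: "cuspidal_cubic ?f" unfolding cuspidal_cubic_def irreducible_cubic_def
    using form irr Ncusp[of f0 Pc] cusp_f0 Pc by auto
  have fl: "flex_pt ?f Pf" using Nflex flex_f0 Pf by simp
  have un: "\<forall>P'. flex_pt ?f P' \<longrightarrow> proj P' = proj Pf"
  proof (intro allI impI)
    fix P' assume "flex_pt ?f P'"
    then have "proj (?N P') = proj (?N Pf)" using Nflex flex_f0_unique Pf by simp
    then show "proj P' = proj Pf" by (rule Nprojeq)
  qed
  have ind: "indep2 Pf Qf" using indep2_e23 Pf Qf by (simp add: Nindep[of Pf Qf])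
  have ct: "contact ?f Pf Qf 2" using Ncontact contact_f0_e23 Pf Qf by simp
  have ls: "lineset Pf Qf = {proj t | t. t \<noteq> 0 \<and> dot3 n1 t = 0}"
  proof (rule set_eqI, rule iffI)
    fix S assume "S \<in> lineset Pf Qf"
    then obtain a b where ab: "S = proj (a *s Pf + b *s Qf)" "(a, b) \<noteq> (0, 0)" unfolding lineset_def by blast
    have "?N (a *s Pf + b *s Qf) = vector [0, a, b]" unfolding lin Pf Qf by (simp add: vec3_eq e2_def e3_def)
    then have "dot3 n1 (a *s Pf + b *s Qf) = 0" "a *s Pf + b *s Qf \<noteq> 0"
      using ab(2) Nnz[of "a *s Pf + b *s Qf"] by (auto simp: Nm_def vec3_eq)
    then show "S \<in> {proj t | t. t \<noteq> 0 \<and> dot3 n1 t = 0}" using ab(1) by blast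
  next
    fix S assume "S \<in> {proj t | t. t \<noteq> 0 \<and> dot3 n1 t = 0}"
    then obtain t where t: "S = proj t" "t \<noteq> 0" "dot3 n1 t = 0" by blast
    have "?N t = ?N (((?N t)$2) *s Pf + ((?N t)$3) *s Qf)"
      unfolding lin Pf Qf using t(3) by (simp add: vec3_eq e2_def e3_def Nm_def)
    then have teq: "t = ((?N t)$2) *s Pf + ((?N t)$3) *s Qf" using inj by (simp add: inj_eq)
    define y where "y = (?N t)$2"
    define z where "z = (?N t)$3"
    have teq': "t = y *s Pf + z *s Qf" using teq unfolding y_def z_def .
    have "(y, z) \<noteq> (0, 0)" using t(2) teq' by auto
    then show "S \<in> lineset Pf Qf" unfolding lineset_def using t(1) teq' by blast
  qed
  show ?thesis using cc fl un ind ct ls by blast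
qed


lemma exhaust_5:
  fixes x :: 5
  shows "x = 1 \<or> x = 2 \<or> x = 3 \<or> x = 4 \<or> x = 5"
proof (induct x)
  case (of_int z)
  then have "z = 0 \<or> z = 1 \<or> z = 2 \<or> z = 3 \<or> z = 4" by fastforce
  then show ?case by auto
qed

lemma vec5_eq: "(x::'a^5) = y \<longleftrightarrow> x$1 = y$1 \<and> x$2 = y$2 \<and> x$3 = y$3 \<and> x$4 = y$4 \<and> x$5 = y$5"
  unfolding vec_eq_iff by (metis exhaust_5)

definition cA :: "(3 \<Rightarrow> complex^5) \<Rightarrow> complex^3" where "cA qs = (\<chi> i. qs i $ 1)"
definition cB :: "(3 \<Rightarrow> complex^5) \<Rightarrow> complex^3" where "cB qs = (\<chi> i. qs i $ 2)"
definition cC :: "(3 \<Rightarrow> complex^5) \<Rightarrow> complex^3" where "cC qs = (\<chi> i. qs i $ 3)"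
definition cU :: "(3 \<Rightarrow> complex^5) \<Rightarrow> complex^3" where "cU qs = (\<chi> i. qs i $ 4)"
definition cV :: "(3 \<Rightarrow> complex^5) \<Rightarrow> complex^3" where "cV qs = (\<chi> i. qs i $ 5)"

definition c0 :: "(3 \<Rightarrow> complex^5) \<Rightarrow> complex^3" where "c0 qs = cross3 (cU qs) (cV qs)"

definition E0 :: "(3 \<Rightarrow> complex^5) \<Rightarrow> complex^5" where
  "E0 qs = (\<Sum>i\<in>UNIV. (c0 qs)$i *s qs i)"

definition evE :: "(3 \<Rightarrow> complex^5) \<Rightarrow> complex^2 \<Rightarrow> complex" where
  "evE qs w = E0 qs $ 1 * (w$1)^2 + E0 qs $ 2 * w$1 * w$2 + E0 qs $ 3 * (w$2)^2"

lemma Lv_cols: "Lv qs w = w$1 *s cU qs + w$2 *s cV qs"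
  unfolding Lv_def linE_def cU_def cV_def by (simp add: vec3_eq)

lemma Qv_cols: "Qv qs w = (w$1)^2 *s cA qs + (w$1 * w$2) *s cB qs + (w$2)^2 *s cC qs"
  unfolding Qv_def cA_def cB_def cC_def by (simp add: vec3_eq algebra_simps)

lemma sum3_comp: "(\<Sum>i\<in>UNIV. (c::complex^3)$i *s ((qs::3\<Rightarrow>complex^5) i)) $ k = c$1 * qs 1 $ k + c$2 * qs 2 $ k + c$3 * qs 3 $ k"
  by (simp add: sum_3)

lemma E0_comp: "E0 qs $ k = dot3 (c0 qs) (\<chi> i. qs i $ k)"
  unfolding E0_def sum3_comp dot3_def by simp

lemma UV_indep:
  assumes bpf: "base_point_free qs" shows "indep2 (cU qs) (cV qs)"
  unfolding indep2_def
proof (intro allI impI)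
  fix a b assume ab: "a *s cU qs + b *s cV qs = 0"
  show "a = 0 \<and> b = 0"
  proof (rule ccontr)
    assume nz: "\<not> (a = 0 \<and> b = 0)"
    define w :: "complex^2" where "w = vector [a, b]"
    have w: "w \<noteq> 0" using nz unfolding w_def by (auto simp: vec2_eq)
    have "Lv qs w = 0" unfolding Lv_cols w_def using ab by simp
    then have "0 *s Qv qs w + 1 *s Lv qs w = 0" by simp
    then show False using bpf_indep[OF bpf w] unfolding indep2_def by fastforce
  qed
qed

lemma c0_nz: "base_point_free qs \<Longrightarrow> c0 qs \<noteq> 0"
  unfolding c0_def using cross_nz UV_indep by blast

lemma E0_45: "E0 qs $ 4 = 0" "E0 qs $ 5 = 0"
  unfolding E0_comp c0_def cross3_def dot3_def cU_def cV_def by (simp; algebra)+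

lemma E0_Lspan: "E0 qs \<in> Lspan qs"
  unfolding Lspan_def E0_def by blast

lemma E0_nz: "lin_indep3 qs \<Longrightarrow> base_point_free qs \<Longrightarrow> E0 qs \<noteq> 0"
  unfolding lin_indep3_def E0_def using c0_nz by blast

lemma det3_QUV: "det3 (Qv qs w) (cU qs) (cV qs) = evE qs w"
  unfolding evE_def E0_comp Qv_cols c0_def det3_def dot3_def cross3_def cA_def cB_def cC_def
  by (simp add: algebra_simps power2_eq_square)

lemma det3_bil: "det3 Q (a *s U + b *s V) (c *s U + d *s V) = (a * d - b * c) * det3 Q U V"
  unfolding det3_def by (simp; algebra)

lemma Ct_UV: "Ct qs (b *s cU qs + c *s cV qs) w = (c * w$1 - b * w$2) * evE qs w"
  unfolding Ct_def Lv_cols det3_bil det3_QUV by simp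

lemma Ct_lin: "Ct qs (a *s x + b *s y) w = a * Ct qs x w + b * Ct qs y w"
  unfolding Ct_def det3_lin3 ..

lemma orth_parallel:
  assumes "indep2 U V" "dot3 c U = 0" "dot3 c V = 0"
  shows "\<exists>k. c = k *s cross3 U V"
proof -
  let ?W = "cross3 U V"
  have W: "?W \<noteq> 0" using cross_nz assms(1) by blast
  have z: "cross3 ?W c = 0"
    using assms(2,3) unfolding cross3_def dot3_def by (simp add: vec3_eq; algebra)
  have z1: "?W$2 * c$3 = ?W$3 * c$2" "?W$3 * c$1 = ?W$1 * c$3" "?W$1 * c$2 = ?W$2 * c$1"
    using z unfolding cross3_def[of ?W c] by (simp_all add: vec3_eq)
  obtain j where j: "?W$j \<noteq> 0" using W by (auto simp: vec_eq_iff)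
  have "j = 1 \<or> j = 2 \<or> j = 3" by (rule exhaust_3)
  then show ?thesis
  proof (elim disjE)
    assume "j = 1" then show ?thesis using j z1
      by (intro exI[of _ "c$1 / ?W$1"]) (auto simp: vec3_eq field_simps)
  next
    assume "j = 2" then show ?thesis using j z1
      by (intro exI[of _ "c$2 / ?W$2"]) (auto simp: vec3_eq field_simps)
  next
    assume "j = 3" then show ?thesis using j z1
      by (intro exI[of _ "c$3 / ?W$3"]) (auto simp: vec3_eq field_simps)
  qed
qed

lemma Lspan_45:
  assumes bpf: "base_point_free qs" and q: "q \<in> Lspan qs" "q$4 = 0" "q$5 = 0"
  shows "\<exists>k. q = k *s E0 qs"
proof -
  obtain c :: "complex^3" where c: "q = (\<Sum>i\<in>UNIV. c$i *s qs i)" using q(1) unfolding Lspan_def by blast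
  have "dot3 c (cU qs) = 0" "dot3 c (cV qs) = 0"
    using q(2,3) unfolding c sum3_comp dot3_def cU_def cV_def by simp_all
  then obtain k where k: "c = k *s c0 qs" using orth_parallel[OF UV_indep[OF bpf]] unfolding c0_def by blast
  have "q = k *s E0 qs" unfolding c k E0_def by (simp add: vec5_eq sum_3 algebra_simps)
  then show ?thesis by blast
qed

lemma fibquad_45: "fibquad l m $ 4 = 0" "fibquad l m $ 5 = 0"
  unfolding fibquad_def by simp_all

lemma fibquad_nz: assumes "(l::complex^2) \<noteq> 0" "m \<noteq> 0" shows "fibquad l m \<noteq> 0"
proof
  assume z: "fibquad l m = 0"
  have a: "l$1 * m$1 = 0" "l$1 * m$2 + l$2 * m$1 = 0" "l$2 * m$2 = 0"
    using z unfolding fibquad_def by (simp_all add: vec5_eq)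
  show False
  proof (cases "l$1 = 0")
    case True
    then have "l$2 \<noteq> 0" using assms(1) by (simp add: vec2_nz)
    then show False using a True assms(2) by (simp add: vec2_nz)
  next
    case False
    then show False using a assms(2) by (simp add: vec2_nz)
  qed
qed

lemma E0_fact: assumes "lin_indep3 qs" "base_point_free qs"
  shows "\<exists>l m. l \<noteq> 0 \<and> m \<noteq> 0 \<and> E0 qs = fibquad l m"
proof -
  obtain a1 b1 a2 b2 where f: "E0 qs $ 1 = a1*a2" "E0 qs $ 2 = a1*b2 + b1*a2" "E0 qs $ 3 = b1*b2"
    using quad_factor by blast
  define l :: "complex^2" where "l = vector [a1, b1]"
  define m :: "complex^2" where "m = vector [a2, b2]"
  have e: "E0 qs = fibquad l m" unfolding fibquad_def l_def m_def using f E0_45 by (simp add: vec5_eq)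
  have "l \<noteq> 0" "m \<noteq> 0" using E0_nz[OF assms] e unfolding fibquad_def by (auto simp: vec5_eq)
  then show ?thesis using e by blast
qed

lemma EFF_eq: assumes "lin_indep3 qs" "base_point_free qs"
  shows "members_EFF qs = {proj (E0 qs)}"
proof
  show "members_EFF qs \<subseteq> {proj (E0 qs)}"
  proof
    fix S assume "S \<in> members_EFF qs"
    then obtain q l m where q: "S = proj q" "q \<in> Lspan qs" "l \<noteq> 0" "m \<noteq> 0" "q = fibquad l m"
      unfolding members_EFF_def by blast
    obtain k where k: "q = k *s E0 qs" using Lspan_45[OF assms(2) q(2)] q(5) fibquad_45 by metis
    have "k \<noteq> 0" using k fibquad_nz[OF q(3,4)] q(5) by auto
    then show "S \<in> {proj (E0 qs)}" using q(1) k proj_scale by simp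
  qed
  show "{proj (E0 qs)} \<subseteq> members_EFF qs"
    using E0_fact[OF assms] E0_Lspan unfolding members_EFF_def by blast
qed

lemma E2F_sub: "members_E2F qs \<subseteq> members_EFF qs"
  unfolding members_E2F_def members_EFF_def by blast

lemma fibquad_scale: "fibquad (a *s l) (a *s l) = a^2 *s fibquad l l"
  unfolding fibquad_def by (simp add: vec5_eq algebra_simps power2_eq_square)

lemma E2F_iff: assumes "lin_indep3 qs" "base_point_free qs"
  shows "members_E2F qs \<noteq> {} \<longleftrightarrow> (\<exists>l. l \<noteq> 0 \<and> E0 qs = fibquad l l)"
proof
  assume "members_E2F qs \<noteq> {}"
  then obtain q l where q: "q \<in> Lspan qs" "l \<noteq> 0" "q = fibquad l l" unfolding members_E2F_def by blast
  obtain k where k: "q = k *s E0 qs" using Lspan_45[OF assms(2) q(1)] q(3) fibquad_45 by metis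
  have kz: "k \<noteq> 0" using k fibquad_nz[OF q(2) q(2)] q(3) by auto
  define s where "s = csqrt (1/k)"
  have s2: "s^2 = 1/k" unfolding s_def by simp
  have "E0 qs = (1/k) *s q" using k kz by (simp add: vector_smult_assoc)
  also have "\<dots> = fibquad (s *s l) (s *s l)" unfolding fibquad_scale s2 q(3) ..
  finally have "E0 qs = fibquad (s *s l) (s *s l)" .
  moreover have "s *s l \<noteq> 0" using s2 kz q(2) by (auto simp: power2_eq_square)
  ultimately show "\<exists>l. l \<noteq> 0 \<and> E0 qs = fibquad l l" by blast
next
  assume "\<exists>l. l \<noteq> 0 \<and> E0 qs = fibquad l l"
  then show "members_E2F qs \<noteq> {}" unfolding members_E2F_def using E0_Lspan by blast
qed


lemma Ct_bcub: "Ct qs t w = bcub (det3 (cA qs) (cU qs) t) (det3 (cA qs) (cV qs) t + det3 (cB qs) (cU qs) t)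
   (det3 (cB qs) (cV qs) t + det3 (cC qs) (cU qs) t) (det3 (cC qs) (cV qs) t) w"
  unfolding Ct_def Qv_cols Lv_cols det3_def bcub_def by simp algebra

lemma Ct_subst_ex: "\<exists>gp gq gr gs. \<forall>z. Ct qs T (Mv m11 m12 m21 m22 z) = bcub gp gq gr gs z"
  unfolding Ct_bcub bcub_subst by blast

lemma Ct_nonvan: "base_point_free qs \<Longrightarrow> w \<noteq> 0 \<Longrightarrow> \<exists>t. Ct qs t w \<noteq> 0"
  unfolding Ct_def using indep_det bpf_indep by blast

lemma exists_T: "(c::complex^3) \<noteq> 0 \<Longrightarrow> \<exists>T. dot3 c T \<noteq> 0"
proof -
  assume "c \<noteq> 0"
  then have "c$1 \<noteq> 0 \<or> c$2 \<noteq> 0 \<or> c$3 \<noteq> 0" by (simp add: vec3_nz)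
  then show ?thesis
  proof (elim disjE)
    assume "c$1 \<noteq> 0" then show ?thesis by (intro exI[of _ "vector [1,0,0]"]) (simp add: dot3_def)
  next
    assume "c$2 \<noteq> 0" then show ?thesis by (intro exI[of _ "vector [0,1,0]"]) (simp add: dot3_def)
  next
    assume "c$3 \<noteq> 0" then show ?thesis by (intro exI[of _ "vector [0,0,1]"]) (simp add: dot3_def)
  qed
qed

lemma decomp:
  assumes D0: "det3 U V T \<noteq> 0"
  shows "t = dot3 ((1/det3 U V T) *s cross3 U V) t *s T + dot3 ((1/det3 U V T) *s cross3 V T) t *s U
           + dot3 ((1/det3 U V T) *s cross3 T U) t *s V"
proof -
  have c: "det3 U V T *s t = det3 t V T *s U + det3 U t T *s V + det3 U V t *s T"
    using cramer3[of U V T t] .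
  have i1: "det3 t V T = dot3 (cross3 V T) t" and i2: "det3 U t T = dot3 (cross3 T U) t"
    and i3: "det3 U V t = dot3 (cross3 U V) t"
    unfolding det3_def dot3_def cross3_def by (simp; algebra)+
  have dl: "dot3 (a *s x) t = a * dot3 x t" for a x unfolding dot3_def by (simp add: algebra_simps)
  have "t = (1 / det3 U V T) *s (det3 U V T *s t)" using D0 by (simp add: vector_smult_assoc)
  also have "\<dots> = (1 / det3 U V T) *s (det3 t V T *s U + det3 U t T *s V + det3 U V t *s T)" using c by simp
  finally show ?thesis unfolding i1 i2 i3 dl by (simp add: vec3_eq algebra_simps)
qed

lemma solve2: fixes m11 m12 m21 m22 b c :: complex
  assumes "m11 * m22 - m12 * m21 \<noteq> 0" "c * m11 - b * m21 = 0" "c * m12 - b * m22 = 0"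
  shows "b = 0 \<and> c = 0"
proof -
  have "(m11 * m22 - m12 * m21) * c = 0" using assms(2,3) by algebra
  moreover have "(m11 * m22 - m12 * m21) * b = 0" using assms(2,3) by algebra
  ultimately show ?thesis using assms(1) by simp
qed

lemma branch_Rset:
  assumes "base_point_free qs"
  shows "branch qs = {proj t | t. t \<noteq> 0 \<and> card (Rset qs t) < 3}"
  unfolding branch_def using fibre_card[OF assms] unfolding Phi_def by metis

lemma Rset_Roots:
  assumes det: "m11 * m22 - m12 * m21 \<noteq> 0"
    and H: "\<And>z. Ct qs t (Mv m11 m12 m21 m22 z) = bcub p q r s z"
  shows "card (Rset qs t) = card (Roots p q r s)"
  unfolding Rset_def Roots_def roots_subst[OF det, of "Ct qs t"] H ..


lemma disc_shift: "disc p q (3 * s * k) s = - s * (4*(q - 2*(3 * s * k)*k + 3 * s * k^2)^3 + 27 * s * (p - k*q + k^2*(3 * s * k) - k^3 * s)^2)"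
  unfolding disc_def by algebra

lemma Mv_nz: "m11 * m22 - m12 * m21 \<noteq> 0 \<Longrightarrow> z \<noteq> 0 \<Longrightarrow> Mv m11 m12 m21 m22 z \<noteq> 0"
  using Mv_inj Mv_zero by (metis injD)

lemma Ct_U: "Ct qs (cU qs) w = - w$2 * evE qs w"
  using Ct_UV[of qs 1 0 w] by simp

lemma Ct_V: "Ct qs (cV qs) w = w$1 * evE qs w"
  using Ct_UV[of qs 0 1 w] by simp

lemma SQ_case:
  assumes li: "lin_indep3 qs" and bpf: "base_point_free qs"
    and det: "m11 * m22 - m12 * m21 \<noteq> 0"
    and ev: "\<And>z. evE qs (Mv m11 m12 m21 m22 z) = (z$1)^2"
  shows "\<exists>f P Q. cuspidal_cubic f \<and> flex_pt f P \<and> (\<forall>P'. flex_pt f P' \<longrightarrow> proj P' = proj P)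
                   \<and> indep2 P Q \<and> contact f P Q 2 \<and> branch qs = zeroset f \<union> lineset P Q"
proof -
  let ?U = "cU qs" and ?V = "cV qs" and ?M = "Mv m11 m12 m21 m22"
  obtain T where T: "dot3 (c0 qs) T \<noteq> 0" using exists_T c0_nz[OF bpf] by blast
  define D0 where "D0 = det3 ?U ?V T"
  have D0: "D0 \<noteq> 0" using T unfolding D0_def c0_def det3_dot_cross .
  define nt where "nt = (1/D0) *s cross3 ?U ?V"
  define nb where "nb = (1/D0) *s cross3 ?V T"
  define ng where "ng = (1/D0) *s cross3 T ?U"
  have dec: "t = dot3 nt t *s T + 1 *s (dot3 nb t *s ?U + dot3 ng t *s ?V)" for t
    using decomp[of ?U ?V T t] D0 unfolding nt_def nb_def ng_def D0_def by (simp add: add.assoc)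
  obtain gp gq gr gs where g: "\<And>z. Ct qs T (?M z) = bcub gp gq gr gs z"
    using Ct_subst_ex by blast
  define cp where "cp t = dot3 nt t * gp + dot3 ng t * m11 - dot3 nb t * m21" for t
  define cq where "cq t = dot3 nt t * gq + dot3 ng t * m12 - dot3 nb t * m22" for t
  define cr where "cr t = dot3 nt t * gr" for t
  define cs where "cs t = dot3 nt t * gs" for t
  have Hct: "Ct qs t (?M z) = bcub (cp t) (cq t) (cr t) (cs t) z" for t z
  proof -
    have "Ct qs t (?M z) = Ct qs (dot3 nt t *s T + 1 *s (dot3 nb t *s ?U + dot3 ng t *s ?V)) (?M z)"
      using arg_cong[where f="\<lambda>x. Ct qs x (?M z)", OF dec[of t]] .
    also have "\<dots> = dot3 nt t * bcub gp gq gr gs z + (dot3 ng t * (?M z)$1 - dot3 nb t * (?M z)$2) * (z$1)^2"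
      unfolding Ct_lin Ct_U Ct_V g ev by (simp add: algebra_simps)
    also have "\<dots> = bcub (cp t) (cq t) (cr t) (cs t) z"
      unfolding cp_def cq_def cr_def cs_def bcub_def Mv_def by simp algebra
    finally show ?thesis .
  qed
  have gs: "gs \<noteq> 0"
  proof
    assume gs0: "gs = 0"
    obtain t0 where "Ct qs t0 (?M (vector [0, 1])) \<noteq> 0"
      using Ct_nonvan[OF bpf Mv_nz[OF det]] by (force simp: vec2_eq)
    then show False unfolding Hct using gs0 by (simp add: bcub_def cs_def)
  qed
  define k where "k = gr / (3 * gs)"
  define n1 where "n1 = gs *s nt"
  define n2 where "n2 = (gp - k*gq + k^2*gr - k^3*gs) *s nt + (m11 - k*m12) *s ng + (k*m22 - m21) *s nb"
  define n3 where "n3 = (gq - 2*k*gr + 3*k^2*gs) *s nt + m12 *s ng + (- m22) *s nb"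
  have N1: "dot3 n1 t = cs t" for t unfolding n1_def cs_def dot3_def by (simp add: algebra_simps)
  have N2: "dot3 n2 t = cp t - k * cq t + k^2 * cr t - k^3 * cs t" for t
    unfolding n2_def cp_def cq_def cr_def cs_def dot3_def by simp algebra
  have N3: "dot3 n3 t = cq t - 2 * k * cr t + 3 * k^2 * cs t" for t
    unfolding n3_def cp_def cq_def cr_def cs_def dot3_def by simp algebra
  have key: "t = 0" if "dot3 nt t = 0" "cp t = 0" "cq t = 0" for t
  proof -
    have "dot3 ng t * m11 - dot3 nb t * m21 = 0" "dot3 ng t * m12 - dot3 nb t * m22 = 0"
      using that unfolding cp_def cq_def by simp_all
    then have "dot3 nb t = 0 \<and> dot3 ng t = 0" using solve2[OF det] by blast
    then show "t = 0" using dec[of t] that(1) by simp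
  qed
  have inj: "inj (Nm n1 n2 n3)"
  proof (rule injI)
    fix x y assume xy: "Nm n1 n2 n3 x = Nm n1 n2 n3 y"
    define d where "d = 1 *s x + (-1) *s y"
    have "Nm n1 n2 n3 d = 0" unfolding d_def Nm_lin xy by simp
    then have z: "dot3 n1 d = 0" "dot3 n2 d = 0" "dot3 n3 d = 0" unfolding Nm_def by (simp_all add: vec3_eq)
    have t0: "dot3 nt d = 0" using z(1) gs unfolding N1 cs_def by simp
    then have "cr d = 0" "cs d = 0" unfolding cr_def cs_def by simp_all
    then have "cp d = 0" "cq d = 0" using z(2,3) unfolding N2 N3 by simp_all
    then have "d = 0" using key t0 by blast
    then show "x = y" unfolding d_def by (simp add: vec3_eq)
  qed
  obtain Pf Qf where pk: "cuspidal_cubic (\<lambda>v. f0 (Nm n1 n2 n3 v))" "flex_pt (\<lambda>v. f0 (Nm n1 n2 n3 v)) Pf"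
     "\<forall>P'. flex_pt (\<lambda>v. f0 (Nm n1 n2 n3 v)) P' \<longrightarrow> proj P' = proj Pf"
     "indep2 Pf Qf" "contact (\<lambda>v. f0 (Nm n1 n2 n3 v)) Pf Qf 2"
     "lineset Pf Qf = {proj t | t. t \<noteq> 0 \<and> dot3 n1 t = 0}"
    using cubic_package[OF inj] by blast
  let ?f = "\<lambda>v. f0 (Nm n1 n2 n3 v)"
  have BR: "card (Rset qs t) < 3 \<longleftrightarrow> dot3 n1 t = 0 \<or> ?f t = 0" if t: "t \<noteq> 0" for t
  proof -
    have nz: "\<not> (cp t = 0 \<and> cq t = 0 \<and> cr t = 0 \<and> cs t = 0)"
    proof
      assume a: "cp t = 0 \<and> cq t = 0 \<and> cr t = 0 \<and> cs t = 0"
      then have "dot3 nt t = 0" using gs unfolding cs_def by simp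
      then show False using key a t by blast
    qed
    have cr: "cr t = 3 * cs t * k" unfolding cr_def cs_def k_def using gs by simp
    have "card (Rset qs t) < 3 \<longleftrightarrow> disc (cp t) (cq t) (cr t) (cs t) = 0"
      unfolding Rset_Roots[OF det Hct] lemmaB[OF nz] ..
    also have "disc (cp t) (cq t) (cr t) (cs t) = disc (cp t) (cq t) (3 * cs t * k) (cs t)"
      by (simp only: cr)
    also have "\<dots> = - cs t * (4*(cq t - 2*(3 * cs t * k)*k + 3 * cs t * k^2)^3
        + 27 * cs t * (cp t - k*cq t + k^2*(3 * cs t * k) - k^3 * cs t)^2)"
      by (rule disc_shift)
    also have "\<dots> = - dot3 n1 t * ?f t"
      by (simp only: f0_def Nm_def vector_3 N1 N2 N3 cr) algebra
    finally show ?thesis by simp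
  qed
  have "branch qs = zeroset ?f \<union> lineset Pf Qf"
    unfolding branch_Rset[OF bpf] pk(6) zeroset_def using BR by blast
  then show ?thesis using pk by blast
qed


definition Dq :: "complex \<Rightarrow> complex \<Rightarrow> complex^3 \<Rightarrow> complex" where
  "Dq gp gs v = disc (gp * v$1) (v$2) (v$3) (gs * v$1)"

lemma Dq_scale: "Dq gp gs (c *s v) = c^4 * Dq gp gs v"
  unfolding Dq_def disc_def by simp algebra

lemma Dq_zero: "Dq gp gs 0 = 0"
  unfolding Dq_def disc_def by simp

lemma cubic_nonroot:
  fixes a3 a2 a1 a0 :: complex
  assumes "a3 \<noteq> 0" shows "\<exists>z. a3 * z^3 + a2 * z^2 + a1 * z + a0 \<noteq> 0"
proof -
  have "[:a0, a1, a2, a3:] \<noteq> 0" using assms by simp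
  then obtain z where "poly [:a0, a1, a2, a3:] z \<noteq> 0" using poly_all_0_iff_0 by blast
  then show ?thesis by (intro exI[of _ z]) (simp add: algebra_simps power2_eq_square power3_eq_cube)
qed

lemma Dq_noline_normal:
  assumes gp: "gp \<noteq> 0" and gs: "gs \<noteq> 0" and n: "(n::complex^3) \<noteq> 0"
  shows "\<exists>v. dot3 n v = 0 \<and> Dq gp gs v \<noteq> 0"
proof (cases "n$2 = 0")
  case n2: True
  show ?thesis
  proof (cases "n$3 = 0")
    case True
    then show ?thesis using n2
      by (intro exI[of _ "vector [0, 1, 1]"]) (simp add: dot3_def Dq_def disc_def)
  next
    case False
    define nu where "nu = - n$1 / n$3"
    obtain y where y: "(-4*gs) * y^3 + nu^2 * y^2 + (18*gp*gs*nu) * y + (- 4*gp*nu^3 - 27*gp^2*gs^2) \<noteq> 0"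
    proof -
      have "-4*gs \<noteq> 0" using gs by simp
      from cubic_nonroot[of "-4*gs" "nu^2" "18*gp*gs*nu" "- 4*gp*nu^3 - 27*gp^2*gs^2", OF this]
      show ?thesis using that by blast
    qed
    have "Dq gp gs (vector [1, y, nu]) = (-4*gs) * y^3 + nu^2 * y^2 + (18*gp*gs*nu) * y + (- 4*gp*nu^3 - 27*gp^2*gs^2)"
      unfolding Dq_def disc_def by (simp; algebra)
    moreover have "dot3 n (vector [1, y, nu]) = 0" using n2 False unfolding dot3_def nu_def by simp
    ultimately show ?thesis using y by metis
  qed
next
  case n2: False
  show ?thesis
  proof (cases "n$3 = 0")
    case True
    define mu where "mu = - n$1 / n$2"
    obtain z where z: "(-4*gp) * z^3 + mu^2 * z^2 + (18*gp*gs*mu) * z + (- 4*gs*mu^3 - 27*gp^2*gs^2) \<noteq> 0"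
    proof -
      have "-4*gp \<noteq> 0" using gp by simp
      from cubic_nonroot[of "-4*gp" "mu^2" "18*gp*gs*mu" "- 4*gs*mu^3 - 27*gp^2*gs^2", OF this]
      show ?thesis using that by blast
    qed
    have "Dq gp gs (vector [1, mu, z]) = (-4*gp) * z^3 + mu^2 * z^2 + (18*gp*gs*mu) * z + (- 4*gs*mu^3 - 27*gp^2*gs^2)"
      unfolding Dq_def disc_def by (simp; algebra)
    moreover have "dot3 n (vector [1, mu, z]) = 0" using n2 True unfolding dot3_def mu_def by simp
    ultimately show ?thesis using z by metis
  next
    case False
    have "Dq gp gs (vector [0, n$3, - n$2]) = (n$3)^2 * (n$2)^2" unfolding Dq_def disc_def by simp
    moreover have "dot3 n (vector [0, n$3, - n$2]) = 0" unfolding dot3_def by (simp add: algebra_simps)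
    ultimately show ?thesis using n2 False by (intro exI[of _ "vector [0, n$3, - n$2]"]) simp
  qed
qed

lemma XY_case:
  assumes li: "lin_indep3 qs" and bpf: "base_point_free qs"
    and det: "m11 * m22 - m12 * m21 \<noteq> 0"
    and ev: "\<And>z. evE qs (Mv m11 m12 m21 m22 z) = z$1 * z$2"
  shows "\<not> (\<exists>P Q. indep2 P Q \<and> lineset P Q \<subseteq> branch qs)"
proof -
  let ?U = "cU qs" and ?V = "cV qs" and ?M = "Mv m11 m12 m21 m22"
  obtain T where T: "dot3 (c0 qs) T \<noteq> 0" using exists_T c0_nz[OF bpf] by blast
  define D0 where "D0 = det3 ?U ?V T"
  have D0: "D0 \<noteq> 0" using T unfolding D0_def c0_def det3_dot_cross .
  define nt where "nt = (1/D0) *s cross3 ?U ?V"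
  define nb where "nb = (1/D0) *s cross3 ?V T"
  define ng where "ng = (1/D0) *s cross3 T ?U"
  have dec: "t = dot3 nt t *s T + 1 *s (dot3 nb t *s ?U + dot3 ng t *s ?V)" for t
    using decomp[of ?U ?V T t] D0 unfolding nt_def nb_def ng_def D0_def by (simp add: add.assoc)
  obtain gp gq gr gs where g: "\<And>z. Ct qs T (?M z) = bcub gp gq gr gs z"
    using Ct_subst_ex by blast
  define cp where "cp t = dot3 nt t * gp" for t
  define cq where "cq t = dot3 nt t * gq + dot3 ng t * m11 - dot3 nb t * m21" for t
  define cr where "cr t = dot3 nt t * gr + dot3 ng t * m12 - dot3 nb t * m22" for t
  define cs where "cs t = dot3 nt t * gs" for t
  have Hct: "Ct qs t (?M z) = bcub (cp t) (cq t) (cr t) (cs t) z" for t z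
  proof -
    have "Ct qs t (?M z) = Ct qs (dot3 nt t *s T + 1 *s (dot3 nb t *s ?U + dot3 ng t *s ?V)) (?M z)"
      using arg_cong[where f="\<lambda>x. Ct qs x (?M z)", OF dec[of t]] .
    also have "\<dots> = dot3 nt t * bcub gp gq gr gs z + (dot3 ng t * (?M z)$1 - dot3 nb t * (?M z)$2) * (z$1 * z$2)"
      unfolding Ct_lin Ct_U Ct_V g ev by (simp add: algebra_simps)
    also have "\<dots> = bcub (cp t) (cq t) (cr t) (cs t) z"
      unfolding cp_def cq_def cr_def cs_def bcub_def Mv_def by simp algebra
    finally show ?thesis .
  qed
  have gs: "gs \<noteq> 0"
  proof
    assume gs0: "gs = 0"
    obtain t0 where "Ct qs t0 (?M (vector [0, 1])) \<noteq> 0"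
      using Ct_nonvan[OF bpf Mv_nz[OF det]] by (force simp: vec2_eq)
    then show False unfolding Hct using gs0 by (simp add: bcub_def cs_def)
  qed
  have gp: "gp \<noteq> 0"
  proof
    assume gp0: "gp = 0"
    obtain t0 where "Ct qs t0 (?M (vector [1, 0])) \<noteq> 0"
      using Ct_nonvan[OF bpf Mv_nz[OF det]] by (force simp: vec2_eq)
    then show False unfolding Hct using gp0 by (simp add: bcub_def cp_def)
  qed
  define n2 where "n2 = gq *s nt + m11 *s ng + (- m21) *s nb"
  define n3 where "n3 = gr *s nt + m12 *s ng + (- m22) *s nb"
  have N2: "dot3 n2 t = cq t" for t unfolding n2_def cq_def dot3_def by simp algebra
  have N3: "dot3 n3 t = cr t" for t unfolding n3_def cr_def dot3_def by simp algebra
  have key: "t = 0" if "dot3 nt t = 0" "cq t = 0" "cr t = 0" for t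
  proof -
    have "dot3 ng t * m11 - dot3 nb t * m21 = 0" "dot3 ng t * m12 - dot3 nb t * m22 = 0"
      using that unfolding cq_def cr_def by simp_all
    then have "dot3 nb t = 0 \<and> dot3 ng t = 0" using solve2[OF det] by blast
    then show "t = 0" using dec[of t] that(1) by simp
  qed
  let ?N = "Nm nt n2 n3"
  have inj: "inj ?N"
  proof (rule injI)
    fix x y assume xy: "?N x = ?N y"
    define d where "d = 1 *s x + (-1) *s y"
    have "?N d = 0" unfolding d_def Nm_lin xy by simp
    then have z: "dot3 nt d = 0" "dot3 n2 d = 0" "dot3 n3 d = 0" unfolding Nm_def by (simp_all add: vec3_eq)
    then have "d = 0" using key unfolding N2 N3 by blast
    then show "x = y" unfolding d_def by (simp add: vec3_eq)
  qed
  interpret goodN ?N by (rule goodN_Nm[OF inj])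
  have discN: "disc (cp t) (cq t) (cr t) (cs t) = Dq gp gs (?N t)" for t
    unfolding Dq_def Nm_def by (simp add: N2 N3 cp_def cs_def mult.commute)
  have BR: "card (Rset qs t) < 3 \<longleftrightarrow> Dq gp gs (?N t) = 0" if t: "t \<noteq> 0" for t
  proof -
    have nz: "\<not> (cp t = 0 \<and> cq t = 0 \<and> cr t = 0 \<and> cs t = 0)"
    proof
      assume a: "cp t = 0 \<and> cq t = 0 \<and> cr t = 0 \<and> cs t = 0"
      then have "dot3 nt t = 0" using gs unfolding cs_def by simp
      then show False using key a t by blast
    qed
    show ?thesis unfolding Rset_Roots[OF det Hct] lemmaB[OF nz] discN ..
  qed
  have inB: "Dq gp gs (?N x) = 0" if "proj x \<in> branch qs" for x
  proof -
    have "proj x \<in> {proj t |t. t \<noteq> 0 \<and> card (Rset qs t) < 3}"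
      using that by (simp only: branch_Rset[OF bpf])
    then obtain t where t: "proj x = proj t" "t \<noteq> 0" "card (Rset qs t) < 3"
      by (auto simp only: mem_Collect_eq)
    obtain c where c: "x = c *s t" using t(1)[symmetric] unfolding proj_eq_iff by blast
    have "Dq gp gs (?N t) = 0" using BR t by blast
    then show ?thesis unfolding c Nsm Dq_scale by simp
  qed
  show ?thesis
  proof
    assume "\<exists>P Q. indep2 P Q \<and> lineset P Q \<subseteq> branch qs"
    then obtain P Q where PQ: "indep2 P Q" "lineset P Q \<subseteq> branch qs" by blast
    have all: "Dq gp gs (a *s ?N P + b *s ?N Q) = 0" for a b
    proof (cases "(a, b) = (0, 0)")
      case True then show ?thesis by (simp add: Dq_zero)
    next
      case False
      then have "proj (a *s P + b *s Q) \<in> branch qs" using PQ(2) unfolding lineset_def by blast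
      then show ?thesis using inB lin by metis
    qed
    have "indep2 (?N P) (?N Q)" using PQ(1) Nindep by blast
    then obtain a b where "Dq gp gs (a *s ?N P + b *s ?N Q) \<noteq> 0"
      using noline_gen Dq_noline_normal[OF gp gs] by blast
    then show False using all by blast
  qed
qed


lemma evE_fib: "E0 qs = fibquad l m \<Longrightarrow> evE qs w = (l$1 * w$1 + l$2 * w$2) * (m$1 * w$1 + m$2 * w$2)"
  unfolding evE_def fibquad_def by (simp add: algebra_simps power2_eq_square)

lemma sq_M:
  fixes l :: "complex^2"
  assumes l: "l \<noteq> 0"
  shows "\<exists>m11 m12 m21 m22. m11 * m22 - m12 * m21 \<noteq> 0 \<and>
           (\<forall>z. l$1 * (Mv m11 m12 m21 m22 z)$1 + l$2 * (Mv m11 m12 m21 m22 z)$2 = z$1)"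
proof (cases "l$1 = 0")
  case False
  show ?thesis using False
    by (intro exI[of _ "1/l$1"] exI[of _ "l$2"] exI[of _ 0] exI[of _ "- l$1"] conjI allI)
       (simp_all add: Mv_def field_simps)
next
  case True
  then have l2: "l$2 \<noteq> 0" using l by (simp add: vec2_nz)
  show ?thesis using True l2
    by (intro exI[of _ 0] exI[of _ "l$2"] exI[of _ "1/l$2"] exI[of _ "- l$1"] conjI allI)
       (simp_all add: Mv_def field_simps)
qed

lemma xy_M:
  fixes l m :: "complex^2"
  assumes d: "l$1 * m$2 - l$2 * m$1 \<noteq> 0"
  shows "\<exists>m11 m12 m21 m22. m11 * m22 - m12 * m21 \<noteq> 0 \<and>
           (\<forall>z. l$1 * (Mv m11 m12 m21 m22 z)$1 + l$2 * (Mv m11 m12 m21 m22 z)$2 = z$1) \<and>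
           (\<forall>z. m$1 * (Mv m11 m12 m21 m22 z)$1 + m$2 * (Mv m11 m12 m21 m22 z)$2 = z$2)"
proof -
  define dd where "dd = l$1 * m$2 - l$2 * m$1"
  have dd: "dd \<noteq> 0" using d dd_def by simp
  have "(m$2/dd) * (l$1/dd) - (- l$2/dd) * (- m$1/dd) = (m$2 * l$1 - l$2 * m$1) / (dd*dd)"
    by (simp add: times_divide_times_eq diff_divide_distrib)
  also have "m$2 * l$1 - l$2 * m$1 = dd" unfolding dd_def by (simp add: algebra_simps)
  finally have det: "(m$2/dd) * (l$1/dd) - (- l$2/dd) * (- m$1/dd) \<noteq> 0" using dd by simp
  have a: "l$1 * (Mv (m$2/dd) (- l$2/dd) (- m$1/dd) (l$1/dd) z)$1 + l$2 * (Mv (m$2/dd) (- l$2/dd) (- m$1/dd) (l$1/dd) z)$2 = z$1" for z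
  proof -
    have "l$1 * (Mv (m$2/dd) (- l$2/dd) (- m$1/dd) (l$1/dd) z)$1 + l$2 * (Mv (m$2/dd) (- l$2/dd) (- m$1/dd) (l$1/dd) z)$2
        = (l$1 * m$2 - l$2 * m$1) * z$1 / dd"
      unfolding Mv_def using dd by (simp add: field_simps)
    then show ?thesis using dd unfolding dd_def by simp
  qed
  have b: "m$1 * (Mv (m$2/dd) (- l$2/dd) (- m$1/dd) (l$1/dd) z)$1 + m$2 * (Mv (m$2/dd) (- l$2/dd) (- m$1/dd) (l$1/dd) z)$2 = z$2" for z
  proof -
    have "m$1 * (Mv (m$2/dd) (- l$2/dd) (- m$1/dd) (l$1/dd) z)$1 + m$2 * (Mv (m$2/dd) (- l$2/dd) (- m$1/dd) (l$1/dd) z)$2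
        = (l$1 * m$2 - l$2 * m$1) * z$2 / dd"
      unfolding Mv_def using dd by (simp add: field_simps)
    then show ?thesis using dd unfolding dd_def by simp
  qed
  show ?thesis using det dd a b by (intro exI[of _ "m$2/dd"] exI[of _ "- l$2/dd"] exI[of _ "- m$1/dd"] exI[of _ "l$1/dd"]) simp
qed

theorem mainTheorem8:
  fixes qs :: "3 \<Rightarrow> complex^5"
  assumes "lin_indep3 qs" and "base_point_free qs"
  shows "(members_E2F qs \<noteq> {} \<longleftrightarrow>
            (\<exists>P Q. indep2 P Q \<and> lineset P Q \<subseteq> branch qs))
       \<and> ((\<exists>P Q. indep2 P Q \<and> lineset P Q \<subseteq> branch qs) \<longleftrightarrow>
            (\<exists>f P Q. cuspidal_cubic f \<and> flex_pt f P
                   \<and> (\<forall>P'. flex_pt f P' \<longrightarrow> proj P' = proj P)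
                   \<and> indep2 P Q \<and> contact f P Q 2
                   \<and> branch qs = zeroset f \<union> lineset P Q))
       \<and> (\<forall>a\<in>members_E2F qs. \<forall>b\<in>members_E2F qs. a = b)
       \<and> (\<exists>!m. m \<in> members_EFF qs)"
proof -
  note li = assms(1) and bpf = assms(2)
  have EFF: "members_EFF qs = {proj (E0 qs)}" by (rule EFF_eq[OF li bpf])
  have p3: "\<forall>a\<in>members_E2F qs. \<forall>b\<in>members_E2F qs. a = b" using E2F_sub EFF by blast
  have p4: "\<exists>!m. m \<in> members_EFF qs" using EFF by blast
  have iii_ii: "(\<exists>f P Q. cuspidal_cubic f \<and> flex_pt f P
                   \<and> (\<forall>P'. flex_pt f P' \<longrightarrow> proj P' = proj P)
                   \<and> indep2 P Q \<and> contact f P Q 2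
                   \<and> branch qs = zeroset f \<union> lineset P Q) \<Longrightarrow> (\<exists>P Q. indep2 P Q \<and> lineset P Q \<subseteq> branch qs)"
    by blast
  show ?thesis
  proof (cases "\<exists>l. l \<noteq> 0 \<and> E0 qs = fibquad l l")
    case True
    then obtain l where l: "l \<noteq> 0" "E0 qs = fibquad l l" by blast
    obtain m11 m12 m21 m22 where M: "m11 * m22 - m12 * m21 \<noteq> 0"
      "\<And>z. l$1 * (Mv m11 m12 m21 m22 z)$1 + l$2 * (Mv m11 m12 m21 m22 z)$2 = z$1"
      using sq_M[OF l(1)] by blast
    have ev: "evE qs (Mv m11 m12 m21 m22 z) = (z$1)^2" for z
      unfolding evE_fib[OF l(2)] M(2) by (simp add: power2_eq_square)
    have iii: "\<exists>f P Q. cuspidal_cubic f \<and> flex_pt f P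
                   \<and> (\<forall>P'. flex_pt f P' \<longrightarrow> proj P' = proj P)
                   \<and> indep2 P Q \<and> contact f P Q 2
                   \<and> branch qs = zeroset f \<union> lineset P Q"
      using SQ_case[OF li bpf M(1) ev] .
    have i: "members_E2F qs \<noteq> {}" using E2F_iff[OF li bpf] True by blast
    show ?thesis using iii iii_ii[OF iii] i p3 p4 by blast
  next
    case False
    have i: "members_E2F qs = {}" using E2F_iff[OF li bpf] False by blast
    obtain l m where lm: "l \<noteq> 0" "m \<noteq> 0" "E0 qs = fibquad l m" using E0_fact[OF li bpf] by blast
    have d: "l$1 * m$2 - l$2 * m$1 \<noteq> 0"
    proof
      assume "l$1 * m$2 - l$2 * m$1 = 0"
      then have "proj l = proj m" using proj2_eq_det[OF lm(1,2)] by simp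
      then obtain c where c: "c \<noteq> 0" "m = c *s l" by (auto simp: proj_eq_iff)
      define s where "s = csqrt c"
      have s2: "s^2 = c" unfolding s_def by simp
      have "E0 qs = fibquad (s *s l) (s *s l)"
        unfolding lm(3) c(2) fibquad_def using s2 by (simp add: vec5_eq algebra_simps power2_eq_square)
      moreover have "s *s l \<noteq> 0" using s2 c(1) lm(1) by (auto simp: power2_eq_square)
      ultimately show False using False by blast
    qed
    obtain m11 m12 m21 m22 where M: "m11 * m22 - m12 * m21 \<noteq> 0"
      "\<And>z. l$1 * (Mv m11 m12 m21 m22 z)$1 + l$2 * (Mv m11 m12 m21 m22 z)$2 = z$1"
      "\<And>z. m$1 * (Mv m11 m12 m21 m22 z)$1 + m$2 * (Mv m11 m12 m21 m22 z)$2 = z$2"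
      using xy_M[OF d] by blast
    have ev: "evE qs (Mv m11 m12 m21 m22 z) = z$1 * z$2" for z
      unfolding evE_fib[OF lm(3)] M(2) M(3) ..
    have nii: "\<not> (\<exists>P Q. indep2 P Q \<and> lineset P Q \<subseteq> branch qs)"
      using XY_case[OF li bpf M(1) ev] .
    show ?thesis using i nii iii_ii p3 p4 by blast
  qed
qed


end
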